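(* Let $m$ be a positive integer. The bra-ket $\mathcal R$-dioid $C_m$ is isomorphic, as a Kleene algebra, to its matrix Kleene algebra $\mathrm{Mat}_{m\times m}(C_m)$.
   Context: An $\mathcal R$-dioid is a dioid in which every regular subset $A$ of its multiplicative monoid has a least upper bound $\sum A$ with $\sum(AB)=(\sum A)(\sum B)$; equivalently a $*$-continuous Kleene algebra. An $\mathcal R$-congruence is a semiring congruence $\rho$ such that regular sets with equal downward closures modulo $\rho$ have congruent suprema. Let $\Delta_m=\{p_0,\dots,p_{m-1},q_0,\dots,q_{m-1}\}$ and $\mathcal R\Delta_m^*$ the algebra of regular languages over $\Delta_m$ (union, concatenation, star). The bra-ket $\mathcal R$-dioid is $C_m=\mathcal R\Delta_m^*/\rho_m$, where $\rho_m$ is the least $\mathcal R$-congruence containing $p_iq_j=\delta_{i,j}$ for $i,j<m$ and $q_0p_0+\dots+q_{m-1}p_{m-1}=1$. $\mathrm{Mat}_{m\times m}(C_m)$ carries matrix sum, product and the standard matrix star. *)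

theory Defs
  imports Main
begin

datatype bk = P nat | Q nat

type_synonym lang = "bk list set"

definition lconc :: "lang \<Rightarrow> lang \<Rightarrow> lang" where
  "lconc L1 L2 = {u @ v | u v. u \<in> L1 \<and> v \<in> L2}"

primrec lpow :: "lang \<Rightarrow> nat \<Rightarrow> lang" where
  "lpow L 0 = {[]}"
| "lpow L (Suc n) = lconc L (lpow L n)"

definition lstar :: "lang \<Rightarrow> lang" where
  "lstar L = (\<Union>n. lpow L n)"

inductive regl :: "nat \<Rightarrow> lang \<Rightarrow> bool" for m where
  regl_empty: "regl m {}"
| regl_eps: "regl m {[]}"
| regl_P: "i < m \<Longrightarrow> regl m {[P i]}"
| regl_Q: "i < m \<Longrightarrow> regl m {[Q i]}"
| regl_union: "regl m A \<Longrightarrow> regl m B \<Longrightarrow> regl m (A \<union> B)"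
| regl_conc: "regl m A \<Longrightarrow> regl m B \<Longrightarrow> regl m (lconc A B)"
| regl_star: "regl m A \<Longrightarrow> regl m (lstar A)"

definition RD :: "nat \<Rightarrow> lang set" where
  "RD m = {L. regl m L}"

definition setprod :: "lang set \<Rightarrow> lang set \<Rightarrow> lang set" where
  "setprod A B = {lconc a b | a b. a \<in> A \<and> b \<in> B}"

primrec setpow :: "lang set \<Rightarrow> nat \<Rightarrow> lang set" where
  "setpow A 0 = {{[]}}"
| "setpow A (Suc n) = setprod A (setpow A n)"

definition setstar :: "lang set \<Rightarrow> lang set" where
  "setstar A = (\<Union>n. setpow A n)"

inductive ratsub :: "nat \<Rightarrow> lang set \<Rightarrow> bool" for m where
  ratsub_fin: "finite A \<Longrightarrow> A \<subseteq> RD m \<Longrightarrow> ratsub m A"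
| ratsub_union: "ratsub m A \<Longrightarrow> ratsub m B \<Longrightarrow> ratsub m (A \<union> B)"
| ratsub_prod: "ratsub m A \<Longrightarrow> ratsub m B \<Longrightarrow> ratsub m (setprod A B)"
| ratsub_star: "ratsub m A \<Longrightarrow> ratsub m (setstar A)"

text \<open>Downward closure of the image of A in the quotient by rho
  (quotient order: [x] <= [a] iff [x] + [a] = [a]).\<close>
definition dclos :: "nat \<Rightarrow> (lang \<times> lang) set \<Rightarrow> lang set \<Rightarrow> lang set set" where
  "dclos m \<rho> A = {\<rho> `` {x} | x. x \<in> RD m \<and> (\<exists>a\<in>A. (x \<union> a, a) \<in> \<rho>)}"

definition Rcong :: "nat \<Rightarrow> (lang \<times> lang) set \<Rightarrow> bool" where
  "Rcong m \<rho> \<longleftrightarrow>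
     \<rho> \<subseteq> RD m \<times> RD m \<and> equiv (RD m) \<rho> \<and>
     (\<forall>a b c d. (a, b) \<in> \<rho> \<longrightarrow> (c, d) \<in> \<rho> \<longrightarrow>
        (a \<union> c, b \<union> d) \<in> \<rho> \<and> (lconc a c, lconc b d) \<in> \<rho>) \<and>
     (\<forall>A B. ratsub m A \<longrightarrow> ratsub m B \<longrightarrow> dclos m \<rho> A = dclos m \<rho> B \<longrightarrow>
        (\<Union>A, \<Union>B) \<in> \<rho>)"

text \<open>Generating relations: p_i q_j = delta_ij and sum_i q_i p_i = 1.\<close>
definition gens :: "nat \<Rightarrow> (lang \<times> lang) set" where
  "gens m = {({[P i, Q j]}, if i = j then {[]} else {}) | i j. i < m \<and> j < m}
            \<union> {({[Q i, P i] | i. i < m}, {[]})}"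

definition rho :: "nat \<Rightarrow> (lang \<times> lang) set" where
  "rho m = \<Inter>{\<rho>. Rcong m \<rho> \<and> gens m \<subseteq> \<rho>}"

type_synonym cls = "lang set"

definition C :: "nat \<Rightarrow> cls set" where
  "C m = RD m // rho m"

definition czero :: "nat \<Rightarrow> cls" where "czero m = rho m `` {{}}"
definition cone :: "nat \<Rightarrow> cls" where "cone m = rho m `` {{[]}}"
definition cadd :: "nat \<Rightarrow> cls \<Rightarrow> cls \<Rightarrow> cls" where
  "cadd m X Y = (\<Union>x\<in>X. \<Union>y\<in>Y. rho m `` {x \<union> y})"
definition cmul :: "nat \<Rightarrow> cls \<Rightarrow> cls \<Rightarrow> cls" where
  "cmul m X Y = (\<Union>x\<in>X. \<Union>y\<in>Y. rho m `` {lconc x y})"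
definition cstar :: "nat \<Rightarrow> cls \<Rightarrow> cls" where
  "cstar m X = (\<Union>x\<in>X. rho m `` {lstar x})"

primrec gsum :: "('a \<Rightarrow> 'a \<Rightarrow> 'a) \<Rightarrow> 'a \<Rightarrow> (nat \<Rightarrow> 'a) \<Rightarrow> nat \<Rightarrow> 'a" where
  "gsum pl z f 0 = z"
| "gsum pl z f (Suc n) = pl (gsum pl z f n) (f n)"

text \<open>Standard recursive matrix star for an n x n matrix: split
  M = [[a, b], [c, D]] with a of size 1x1, f = a + b D* c, and
  M* = [[f*, f* b D*], [D* c f*, D* + D* c f* b D*]].\<close>
fun gstar :: "('a \<Rightarrow> 'a \<Rightarrow> 'a) \<Rightarrow> ('a \<Rightarrow> 'a \<Rightarrow> 'a) \<Rightarrow> ('a \<Rightarrow> 'a) \<Rightarrow> 'a \<Rightarrow> nat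
              \<Rightarrow> (nat \<Rightarrow> nat \<Rightarrow> 'a) \<Rightarrow> nat \<Rightarrow> nat \<Rightarrow> 'a" where
  "gstar pl ml st z 0 M = (\<lambda>i j. z)"
| "gstar pl ml st z (Suc n) M =
    (let a = M 0 0;
         b = (\<lambda>j. M 0 (Suc j));
         c = (\<lambda>i. M (Suc i) 0);
         D = (\<lambda>i j. M (Suc i) (Suc j));
         Ds = gstar pl ml st z n D;
         bD = (\<lambda>j. gsum pl z (\<lambda>k. ml (b k) (Ds k j)) n);
         Dc = (\<lambda>i. gsum pl z (\<lambda>k. ml (Ds i k) (c k)) n);
         f = pl a (gsum pl z (\<lambda>k. ml (bD k) (c k)) n);
         fs = st f
     in (\<lambda>i j. if i = 0 then (if j = 0 then fs else ml fs (bD (j - 1)))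
              else (if j = 0 then ml (Dc (i - 1)) fs
                    else pl (Ds (i - 1) (j - 1)) (ml (ml (Dc (i - 1)) fs) (bD (j - 1))))))"

type_synonym cmat = "nat \<Rightarrow> nat \<Rightarrow> cls"

definition mext :: "nat \<Rightarrow> cmat \<Rightarrow> cmat" where
  "mext m M = (\<lambda>i j. if i < m \<and> j < m then M i j else {})"

definition MatC :: "nat \<Rightarrow> cmat set" where
  "MatC m = {M. (\<forall>i<m. \<forall>j<m. M i j \<in> C m) \<and> (\<forall>i j. \<not> (i < m \<and> j < m) \<longrightarrow> M i j = {})}"

definition mzero :: "nat \<Rightarrow> cmat" where
  "mzero m = mext m (\<lambda>i j. czero m)"
definition mone :: "nat \<Rightarrow> cmat" where
  "mone m = mext m (\<lambda>i j. if i = j then cone m else czero m)"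
definition madd :: "nat \<Rightarrow> cmat \<Rightarrow> cmat \<Rightarrow> cmat" where
  "madd m M N = mext m (\<lambda>i j. cadd m (M i j) (N i j))"
definition mmul :: "nat \<Rightarrow> cmat \<Rightarrow> cmat \<Rightarrow> cmat" where
  "mmul m M N = mext m (\<lambda>i j. gsum (cadd m) (czero m) (\<lambda>k. cmul m (M i k) (N k j)) m)"
definition mstar :: "nat \<Rightarrow> cmat \<Rightarrow> cmat" where
  "mstar m M = mext m (gstar (cadd m) (cmul m) (cstar m) (czero m) m M)"

definition KA_iso :: "nat \<Rightarrow> (cls \<Rightarrow> cmat) \<Rightarrow> bool" where
  "KA_iso m h \<longleftrightarrow> bij_betw h (C m) (MatC m) \<and>
     h (czero m) = mzero m \<and> h (cone m) = mone m \<and>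
     (\<forall>x\<in>C m. \<forall>y\<in>C m. h (cadd m x y) = madd m (h x) (h y)
                      \<and> h (cmul m x y) = mmul m (h x) (h y)) \<and>
     (\<forall>x\<in>C m. h (cstar m x) = mstar m (h x))"

end

theory Submission
  imports Defs
begin


locale ka =
  fixes K :: "'a set"
    and pl :: "'a \<Rightarrow> 'a \<Rightarrow> 'a" (infixl "\<oplus>" 65)
    and ml :: "'a \<Rightarrow> 'a \<Rightarrow> 'a" (infixl "\<otimes>" 70)
    and st :: "'a \<Rightarrow> 'a"
    and z :: 'a and e :: 'a
  assumes zK[simp]: "z \<in> K" and eK[simp]: "e \<in> K"
    and plK[simp]: "x \<in> K \<Longrightarrow> y \<in> K \<Longrightarrow> x \<oplus> y \<in> K"
    and mlK[simp]: "x \<in> K \<Longrightarrow> y \<in> K \<Longrightarrow> x \<otimes> y \<in> K"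
    and stK[simp]: "x \<in> K \<Longrightarrow> st x \<in> K"
    and pl_assoc: "x \<in> K \<Longrightarrow> y \<in> K \<Longrightarrow> w \<in> K \<Longrightarrow> x \<oplus> y \<oplus> w = x \<oplus> (y \<oplus> w)"
    and pl_comm: "x \<in> K \<Longrightarrow> y \<in> K \<Longrightarrow> x \<oplus> y = y \<oplus> x"
    and pl_idem[simp]: "x \<in> K \<Longrightarrow> x \<oplus> x = x"
    and pl_z[simp]: "x \<in> K \<Longrightarrow> z \<oplus> x = x"
    and ml_assoc: "x \<in> K \<Longrightarrow> y \<in> K \<Longrightarrow> w \<in> K \<Longrightarrow> x \<otimes> y \<otimes> w = x \<otimes> (y \<otimes> w)"
    and ml_e_l[simp]: "x \<in> K \<Longrightarrow> e \<otimes> x = x"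
    and ml_e_r[simp]: "x \<in> K \<Longrightarrow> x \<otimes> e = x"
    and ml_z_l[simp]: "x \<in> K \<Longrightarrow> z \<otimes> x = z"
    and ml_z_r[simp]: "x \<in> K \<Longrightarrow> x \<otimes> z = z"
    and distl: "x \<in> K \<Longrightarrow> y \<in> K \<Longrightarrow> w \<in> K \<Longrightarrow> x \<otimes> (y \<oplus> w) = x \<otimes> y \<oplus> x \<otimes> w"
    and distr: "x \<in> K \<Longrightarrow> y \<in> K \<Longrightarrow> w \<in> K \<Longrightarrow> (y \<oplus> w) \<otimes> x = y \<otimes> x \<oplus> w \<otimes> x"
    and star_unfold: "x \<in> K \<Longrightarrow> (e \<oplus> x \<otimes> st x) \<oplus> st x = st x"
    and star_ind: "x \<in> K \<Longrightarrow> y \<in> K \<Longrightarrow> x \<otimes> y \<oplus> y = y \<Longrightarrow> st x \<otimes> y \<oplus> y = y"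
begin

lemma pl_z_r[simp]: "x \<in> K \<Longrightarrow> x \<oplus> z = x"
  using pl_comm pl_z zK by metis

lemma pl_lc: "x \<in> K \<Longrightarrow> y \<in> K \<Longrightarrow> w \<in> K \<Longrightarrow> x \<oplus> (y \<oplus> w) = y \<oplus> (x \<oplus> w)"
  by (metis pl_assoc pl_comm)

lemmas pl_ac = pl_assoc pl_comm pl_lc

definition lq :: "'a \<Rightarrow> 'a \<Rightarrow> bool" (infix "\<preceq>" 50) where
  "x \<preceq> y \<longleftrightarrow> x \<oplus> y = y"

lemma lq_refl[simp]: "x \<in> K \<Longrightarrow> x \<preceq> x" by (simp add: lq_def)

lemma lq_trans: "x \<preceq> y \<Longrightarrow> y \<preceq> w \<Longrightarrow> x \<in> K \<Longrightarrow> y \<in> K \<Longrightarrow> w \<in> K \<Longrightarrow> x \<preceq> w"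
  unfolding lq_def by (metis pl_assoc)

lemma lq_antisym: "x \<preceq> y \<Longrightarrow> y \<preceq> x \<Longrightarrow> x \<in> K \<Longrightarrow> y \<in> K \<Longrightarrow> x = y"
  unfolding lq_def by (metis pl_comm)

lemma pl_lq_iff: "x \<in> K \<Longrightarrow> y \<in> K \<Longrightarrow> w \<in> K \<Longrightarrow> (x \<oplus> y \<preceq> w) \<longleftrightarrow> x \<preceq> w \<and> y \<preceq> w"
  unfolding lq_def by (metis pl_assoc pl_comm pl_idem plK)

lemma lq_plI1: "x \<in> K \<Longrightarrow> y \<in> K \<Longrightarrow> x \<preceq> x \<oplus> y"
  unfolding lq_def by (metis pl_assoc pl_idem)

lemma lq_plI2: "x \<in> K \<Longrightarrow> y \<in> K \<Longrightarrow> y \<preceq> x \<oplus> y"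
  using lq_plI1 pl_comm by metis

lemma pl_mono: "x \<preceq> x' \<Longrightarrow> y \<preceq> y' \<Longrightarrow> x \<in> K \<Longrightarrow> y \<in> K \<Longrightarrow> x' \<in> K \<Longrightarrow> y' \<in> K \<Longrightarrow> x \<oplus> y \<preceq> x' \<oplus> y'"
  by (meson lq_plI1 lq_plI2 lq_trans pl_lq_iff plK)

lemma ml_mono_l: "x \<preceq> x' \<Longrightarrow> x \<in> K \<Longrightarrow> x' \<in> K \<Longrightarrow> y \<in> K \<Longrightarrow> x \<otimes> y \<preceq> x' \<otimes> y"
  unfolding lq_def by (metis distr)

lemma ml_mono_r: "y \<preceq> y' \<Longrightarrow> x \<in> K \<Longrightarrow> y \<in> K \<Longrightarrow> y' \<in> K \<Longrightarrow> x \<otimes> y \<preceq> x \<otimes> y'"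
  unfolding lq_def by (metis distl)

lemma z_lq[simp]: "x \<in> K \<Longrightarrow> z \<preceq> x" by (simp add: lq_def)

abbreviation sm :: "(nat \<Rightarrow> 'a) \<Rightarrow> nat \<Rightarrow> 'a" where
  "sm f n \<equiv> gsum pl z f n"

lemma smK[simp]: "(\<And>k. k < n \<Longrightarrow> f k \<in> K) \<Longrightarrow> sm f n \<in> K"
  by (induction n) auto

lemma sm_cong: "(\<And>k. k < n \<Longrightarrow> f k = g k) \<Longrightarrow> sm f n = sm g n"
  by (induction n) auto

lemma sm_cong_simp[cong]: "n = n' \<Longrightarrow> (\<And>k. k < n' =simp=> f k = g k) \<Longrightarrow> gsum pl z f n = gsum pl z g n'"
  unfolding simp_implies_def by (auto intro: sm_cong)

lemma sm_plus: "(\<And>k. k < n \<Longrightarrow> f k \<in> K) \<Longrightarrow> (\<And>k. k < n \<Longrightarrow> g k \<in> K) \<Longrightarrow>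
   sm (\<lambda>k. f k \<oplus> g k) n = sm f n \<oplus> sm g n"
proof (induction n)
  case 0 then show ?case by simp
next
  case (Suc n)
  then show ?case by (simp add: pl_ac)
qed

lemma sm_ml_l: "(\<And>k. k < n \<Longrightarrow> f k \<in> K) \<Longrightarrow> x \<in> K \<Longrightarrow> x \<otimes> sm f n = sm (\<lambda>k. x \<otimes> f k) n"
  by (induction n) (auto simp: distl)

lemma sm_ml_r: "(\<And>k. k < n \<Longrightarrow> f k \<in> K) \<Longrightarrow> x \<in> K \<Longrightarrow> sm f n \<otimes> x = sm (\<lambda>k. f k \<otimes> x) n"
  by (induction n) (auto simp: distr)

lemma sm_front: "(\<And>k. k < Suc n \<Longrightarrow> f k \<in> K) \<Longrightarrow> sm f (Suc n) = f 0 \<oplus> sm (\<lambda>k. f (Suc k)) n"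
proof (induction n)
  case 0 then show ?case by (simp add: pl_comm)
next
  case (Suc n)
  have "sm f (Suc (Suc n)) = sm f (Suc n) \<oplus> f (Suc n)" by simp
  also have "\<dots> = f 0 \<oplus> sm (\<lambda>k. f (Suc k)) n \<oplus> f (Suc n)" using Suc by simp
  also have "\<dots> = f 0 \<oplus> sm (\<lambda>k. f (Suc k)) (Suc n)" using Suc.prems by (simp add: pl_assoc)
  finally show ?case .
qed

lemma sm_zero[simp]: "sm (\<lambda>k. z) n = z"
  by (induction n) auto

lemma sm_swap: "(\<And>i j. i < n \<Longrightarrow> j < n' \<Longrightarrow> f i j \<in> K) \<Longrightarrow>
   sm (\<lambda>i. sm (\<lambda>j. f i j) n') n = sm (\<lambda>j. sm (\<lambda>i. f i j) n) n'"
proof (induction n)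
  case 0 then show ?case by simp
next
  case (Suc n)
  have "sm (\<lambda>i. sm (\<lambda>j. f i j) n') (Suc n) = sm (\<lambda>j. sm (\<lambda>i. f i j) n) n' \<oplus> sm (\<lambda>j. f n j) n'"
    using Suc by simp
  also have "\<dots> = sm (\<lambda>j. sm (\<lambda>i. f i j) n \<oplus> f n j) n'"
    using Suc.prems by (subst sm_plus) auto
  finally show ?case by simp
qed

lemma sm_delta: "j < n \<Longrightarrow> x \<in> K \<Longrightarrow> sm (\<lambda>k. if k = j then x else z) n = x"
proof (induction n)
  case 0 then show ?case by simp
next
  case (Suc n)
  show ?case
  proof (cases "j = n")
    case True
    have "sm (\<lambda>k. if k = j then x else z) n = z"
      using True by (subst sm_cong[where g="\<lambda>k. z"]) auto
    then show ?thesis using True Suc by simp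
  next
    case False
    then show ?thesis using Suc by simp
  qed
qed

lemma sm_lq: "(\<And>k. k < n \<Longrightarrow> f k \<in> K) \<Longrightarrow> y \<in> K \<Longrightarrow> (\<And>k. k < n \<Longrightarrow> f k \<preceq> y) \<Longrightarrow> sm f n \<preceq> y"
  by (induction n) (auto simp: pl_lq_iff)

lemma lq_sm: "(\<And>k. k < n \<Longrightarrow> f k \<in> K) \<Longrightarrow> j < n \<Longrightarrow> f j \<preceq> sm f n"
proof (induction n)
  case 0 then show ?case by simp
next
  case (Suc n)
  show ?case
  proof (cases "j = n")
    case True then show ?thesis using Suc.prems by (simp add: lq_plI2)
  next
    case False
    then have "f j \<preceq> sm f n" using Suc by simp
    moreover have "sm f n \<preceq> sm f n \<oplus> f n" using Suc.prems by (intro lq_plI1) auto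
    ultimately show ?thesis using Suc.prems by (auto intro: lq_trans)
  qed
qed

lemma sm_mono: "(\<And>k. k < n \<Longrightarrow> f k \<in> K) \<Longrightarrow> (\<And>k. k < n \<Longrightarrow> g k \<in> K) \<Longrightarrow>
  (\<And>k. k < n \<Longrightarrow> f k \<preceq> g k) \<Longrightarrow> sm f n \<preceq> sm g n"
  by (induction n) (auto intro: pl_mono)


lemma delta_K[simp]: "(if B then e else z) \<in> K" by simp

abbreviation gs :: "nat \<Rightarrow> (nat \<Rightarrow> nat \<Rightarrow> 'a) \<Rightarrow> nat \<Rightarrow> nat \<Rightarrow> 'a" where
  "gs n M \<equiv> gstar pl ml st z n M"

lemma sm_ml_r2: "(\<And>k. k < n \<Longrightarrow> f k \<in> K) \<Longrightarrow> (\<And>k. k < n \<Longrightarrow> g k \<in> K) \<Longrightarrow> w \<in> K \<Longrightarrow>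
  sm (\<lambda>k. f k \<otimes> (g k \<otimes> w)) n = sm (\<lambda>k. f k \<otimes> g k) n \<otimes> w"
  by (subst sm_ml_r) (auto simp: ml_assoc intro: sm_cong)

lemma gs_Suc_blocks:
  "gs (Suc n) M 0 0 = st (M 0 0 \<oplus> sm (\<lambda>k. sm (\<lambda>l. M 0 (Suc l) \<otimes> gs n (\<lambda>i j. M (Suc i) (Suc j)) l k) n \<otimes> M (Suc k) 0) n)"
  "gs (Suc n) M 0 (Suc j) = st (M 0 0 \<oplus> sm (\<lambda>k. sm (\<lambda>l. M 0 (Suc l) \<otimes> gs n (\<lambda>i j. M (Suc i) (Suc j)) l k) n \<otimes> M (Suc k) 0) n)
       \<otimes> sm (\<lambda>l. M 0 (Suc l) \<otimes> gs n (\<lambda>i j. M (Suc i) (Suc j)) l j) n"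
  "gs (Suc n) M (Suc i) 0 = sm (\<lambda>l. gs n (\<lambda>i j. M (Suc i) (Suc j)) i l \<otimes> M (Suc l) 0) n \<otimes> 
      st (M 0 0 \<oplus> sm (\<lambda>k. sm (\<lambda>l. M 0 (Suc l) \<otimes> gs n (\<lambda>i j. M (Suc i) (Suc j)) l k) n \<otimes> M (Suc k) 0) n)"
  "gs (Suc n) M (Suc i) (Suc j) = gs n (\<lambda>i j. M (Suc i) (Suc j)) i j \<oplus> 
      sm (\<lambda>l. gs n (\<lambda>i j. M (Suc i) (Suc j)) i l \<otimes> M (Suc l) 0) n \<otimes> 
      st (M 0 0 \<oplus> sm (\<lambda>k. sm (\<lambda>l. M 0 (Suc l) \<otimes> gs n (\<lambda>i j. M (Suc i) (Suc j)) l k) n \<otimes> M (Suc k) 0) n)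
      \<otimes> sm (\<lambda>l. M 0 (Suc l) \<otimes> gs n (\<lambda>i j. M (Suc i) (Suc j)) l j) n"
  by (simp_all add: Let_def)

declare gstar.simps(2)[simp del]

lemma gs_K: "(\<And>i j. i < n \<Longrightarrow> j < n \<Longrightarrow> M i j \<in> K) \<Longrightarrow> i < n \<Longrightarrow> j < n \<Longrightarrow> gs n M i j \<in> K"
proof (induction n arbitrary: M i j)
  case 0 then show ?case by simp
next
  case (Suc n)
  have IH: "\<And>i j. i < n \<Longrightarrow> j < n \<Longrightarrow> gs n (\<lambda>i j. M (Suc i) (Suc j)) i j \<in> K"
    using Suc by simp
  have MK: "\<And>i j. i < Suc n \<Longrightarrow> j < Suc n \<Longrightarrow> M i j \<in> K" by (rule Suc.prems)
  show ?case
    using Suc.prems(2,3) 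
    by (cases i; cases j) (simp_all only: gs_Suc_blocks, auto simp: IH MK)
qed


lemma gs_unfold:
  "(\<And>i j. i < n \<Longrightarrow> j < n \<Longrightarrow> M i j \<in> K) \<Longrightarrow> i < n \<Longrightarrow> j < n \<Longrightarrow>
   (if i = j then e else z) \<oplus> sm (\<lambda>k. M i k \<otimes> gs n M k j) n \<preceq> gs n M i j"
proof (induction n arbitrary: M i j)
  case 0 then show ?case by simp
next
  case (Suc n)
  have MK[simp]: "\<And>i j. i < Suc n \<Longrightarrow> j < Suc n \<Longrightarrow> M i j \<in> K" by (rule Suc.prems)
  have SK[simp]: "\<And>i j. i < Suc n \<Longrightarrow> j < Suc n \<Longrightarrow> gs (Suc n) M i j \<in> K" by (rule gs_K) auto
  define a where "a = M 0 0"
  define b where "b = (\<lambda>j. M 0 (Suc j))"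
  define c where "c = (\<lambda>i. M (Suc i) 0)"
  define D where "D = (\<lambda>i j. M (Suc i) (Suc j))"
  define Ds where "Ds = gs n D"
  define bD where "bD = (\<lambda>j. sm (\<lambda>k. b k \<otimes> Ds k j) n)"
  define Dc where "Dc = (\<lambda>i. sm (\<lambda>k. Ds i k \<otimes> c k) n)"
  define f where "f = a \<oplus> sm (\<lambda>k. bD k \<otimes> c k) n"
  define fs where "fs = st f"
  have aK[simp]: "a \<in> K" and bK[simp]: "\<And>k. k < n \<Longrightarrow> b k \<in> K" and cK[simp]: "\<And>k. k < n \<Longrightarrow> c k \<in> K"
    and DK[simp]: "\<And>i j. i < n \<Longrightarrow> j < n \<Longrightarrow> D i j \<in> K"
    by (auto simp: a_def b_def c_def D_def MK)
  have DsK[simp]: "\<And>i j. i < n \<Longrightarrow> j < n \<Longrightarrow> Ds i j \<in> K"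
    unfolding Ds_def by (rule gs_K) auto
  have bDK[simp]: "\<And>j. j < n \<Longrightarrow> bD j \<in> K" and DcK[simp]: "\<And>i. i < n \<Longrightarrow> Dc i \<in> K"
    by (auto simp: bD_def Dc_def)
  have fK[simp]: "f \<in> K" and fsK[simp]: "fs \<in> K" by (auto simp: f_def fs_def)
  have IH: "\<And>i j. i < n \<Longrightarrow> j < n \<Longrightarrow> (if i = j then e else z) \<oplus> sm (\<lambda>k. D i k \<otimes> Ds k j) n \<preceq> Ds i j"
    unfolding Ds_def by (rule Suc.IH) auto
  have S00: "gs (Suc n) M 0 0 = fs"
    and S0j: "\<And>j. gs (Suc n) M 0 (Suc j) = fs \<otimes> bD j"
    and Si0: "\<And>i. gs (Suc n) M (Suc i) 0 = Dc i \<otimes> fs"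
    and Sij: "\<And>i j. gs (Suc n) M (Suc i) (Suc j) = Ds i j \<oplus> Dc i \<otimes> fs \<otimes> bD j"
    unfolding gs_Suc_blocks fs_def f_def bD_def Dc_def a_def b_def c_def Ds_def D_def by simp_all
  have H1: "sm (\<lambda>k. b k \<otimes> Dc k) n = sm (\<lambda>k. bD k \<otimes> c k) n"
  proof -
    have "sm (\<lambda>k. b k \<otimes> Dc k) n = sm (\<lambda>k. sm (\<lambda>l. b k \<otimes> (Ds k l \<otimes> c l)) n) n"
      unfolding Dc_def by (rule sm_cong) (simp add: sm_ml_l)
    also have "\<dots> = sm (\<lambda>l. sm (\<lambda>k. b k \<otimes> (Ds k l \<otimes> c l)) n) n"
      by (rule sm_swap) auto
    also have "\<dots> = sm (\<lambda>k. bD k \<otimes> c k) n"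
      unfolding bD_def by (rule sm_cong) (simp add: sm_ml_r2)
    finally show ?thesis .
  qed
  have H2: "\<And>i. i < n \<Longrightarrow> c i \<oplus> sm (\<lambda>k. D i k \<otimes> Dc k) n \<preceq> Dc i"
  proof -
    fix i assume i: "i < n"
    have "sm (\<lambda>k. D i k \<otimes> Dc k) n = sm (\<lambda>k. sm (\<lambda>l. D i k \<otimes> (Ds k l \<otimes> c l)) n) n"
      unfolding Dc_def using i by (intro sm_cong) (simp add: sm_ml_l)
    also have "\<dots> = sm (\<lambda>l. sm (\<lambda>k. D i k \<otimes> (Ds k l \<otimes> c l)) n) n"
      using i by (intro sm_swap) auto
    also have "\<dots> = sm (\<lambda>l. sm (\<lambda>k. D i k \<otimes> Ds k l) n \<otimes> c l) n"
      using i by (intro sm_cong) (simp add: sm_ml_r2)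
    finally have 1: "sm (\<lambda>k. D i k \<otimes> Dc k) n = sm (\<lambda>l. sm (\<lambda>k. D i k \<otimes> Ds k l) n \<otimes> c l) n" .
    have 2: "c i = sm (\<lambda>l. (if i = l then e else z) \<otimes> c l) n"
      using i by (subst sm_cong[where g="\<lambda>l. if l = i then c i else z"]) (auto simp: sm_delta)
    have "c i \<oplus> sm (\<lambda>k. D i k \<otimes> Dc k) n = sm (\<lambda>l. ((if i = l then e else z) \<oplus> sm (\<lambda>k. D i k \<otimes> Ds k l) n) \<otimes> c l) n"
      unfolding 1 using i by (subst 2) (simp add: sm_plus[symmetric], intro sm_cong, simp add: distr)
    also have "\<dots> \<preceq> sm (\<lambda>l. Ds i l \<otimes> c l) n"
      using i by (intro sm_mono ml_mono_l IH) auto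
    finally show "c i \<oplus> sm (\<lambda>k. D i k \<otimes> Dc k) n \<preceq> Dc i" unfolding Dc_def .
  qed
  have unf: "e \<oplus> f \<otimes> fs \<preceq> fs" unfolding fs_def lq_def by (rule star_unfold) simp
  show ?case
  proof (cases i)
    case 0
    note i0 = 0
    show ?thesis
    proof (cases j)
      case 0
      have "sm (\<lambda>k. M i k \<otimes> gs (Suc n) M k j) (Suc n) = a \<otimes> fs \<oplus> sm (\<lambda>k. b k \<otimes> (Dc k \<otimes> fs)) n"
        using i0 0 by (subst sm_front) (auto simp: S00 Si0 MK a_def b_def gs_K Suc.prems)
      also have "\<dots> = f \<otimes> fs"
        by (simp add: sm_ml_r2 H1 f_def distr)
      finally show ?thesis using i0 0 S00 unf by simp
    next
      case (Suc j')
      have j': "j' < n" using Suc Suc.prems by simp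
      have "sm (\<lambda>k. M i k \<otimes> gs (Suc n) M k j) (Suc n) = a \<otimes> (fs \<otimes> bD j') \<oplus> sm (\<lambda>k. b k \<otimes> (Ds k j' \<oplus> Dc k \<otimes> fs \<otimes> bD j')) n"
        using i0 Suc j' by (subst sm_front) (auto simp: S0j Sij MK a_def b_def gs_K Suc.prems)
      also have "\<dots> = a \<otimes> fs \<otimes> bD j' \<oplus> (bD j' \<oplus> sm (\<lambda>k. b k \<otimes> Dc k) n \<otimes> fs \<otimes> bD j')"
        using j' by (simp add: distl sm_plus ml_assoc sm_ml_r2 bD_def)
      also have "\<dots> = (e \<oplus> f \<otimes> fs) \<otimes> bD j'"
        using j' by (simp add: H1 f_def distr ml_assoc pl_ac)
      also have "\<dots> \<preceq> fs \<otimes> bD j'" using j' unf by (intro ml_mono_l) auto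
      finally show ?thesis using i0 Suc S0j j' by simp
    qed
  next
    case (Suc i')
    have i': "i' < n" using Suc Suc.prems by simp
    note iS = Suc
    show ?thesis
    proof (cases j)
      case 0
      have "sm (\<lambda>k. M i k \<otimes> gs (Suc n) M k j) (Suc n) = c i' \<otimes> fs \<oplus> sm (\<lambda>k. D i' k \<otimes> (Dc k \<otimes> fs)) n"
        using iS 0 i' by (subst sm_front) (auto simp: S00 Si0 MK c_def D_def gs_K Suc.prems)
      also have "\<dots> = (c i' \<oplus> sm (\<lambda>k. D i' k \<otimes> Dc k) n) \<otimes> fs"
        using i' by (simp add: sm_ml_r2 distr)
      also have "\<dots> \<preceq> Dc i' \<otimes> fs" using i' H2 by (intro ml_mono_l) auto
      finally show ?thesis using iS 0 Si0 i' by simp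
    next
      case (Suc j')
      have j': "j' < n" using Suc Suc.prems by simp
      have "sm (\<lambda>k. M i k \<otimes> gs (Suc n) M k j) (Suc n) = c i' \<otimes> (fs \<otimes> bD j') \<oplus> sm (\<lambda>k. D i' k \<otimes> (Ds k j' \<oplus> Dc k \<otimes> fs \<otimes> bD j')) n"
        using iS Suc i' j' by (subst sm_front) (auto simp: S0j Sij MK c_def D_def gs_K Suc.prems)
      also have "\<dots> = c i' \<otimes> fs \<otimes> bD j' \<oplus> (sm (\<lambda>k. D i' k \<otimes> Ds k j') n \<oplus> sm (\<lambda>k. D i' k \<otimes> Dc k) n \<otimes> fs \<otimes> bD j')"
        using i' j' by (simp add: distl sm_plus ml_assoc sm_ml_r2)
      also have "\<dots> = sm (\<lambda>k. D i' k \<otimes> Ds k j') n \<oplus> (c i' \<oplus> sm (\<lambda>k. D i' k \<otimes> Dc k) n) \<otimes> fs \<otimes> bD j'"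
        using i' j' by (simp add: distr ml_assoc pl_ac)
      finally have eq: "sm (\<lambda>k. M i k \<otimes> gs (Suc n) M k j) (Suc n) = \<dots>" .
      have "(if i = j then e else z) \<oplus> sm (\<lambda>k. M i k \<otimes> gs (Suc n) M k j) (Suc n)
          = ((if i' = j' then e else z) \<oplus> sm (\<lambda>k. D i' k \<otimes> Ds k j') n) \<oplus> (c i' \<oplus> sm (\<lambda>k. D i' k \<otimes> Dc k) n) \<otimes> fs \<otimes> bD j'"
        unfolding eq using iS Suc i' j' by (simp add: pl_assoc)
      also have "\<dots> \<preceq> Ds i' j' \<oplus> Dc i' \<otimes> fs \<otimes> bD j'"
        using i' j' H2 IH by (intro pl_mono ml_mono_l) auto
      finally show ?thesis using iS Suc Sij by simp
    qed
  qed
qed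


lemma sm_assoc: "(\<And>k. k < n \<Longrightarrow> A k \<in> K) \<Longrightarrow> (\<And>k l. k < n \<Longrightarrow> l < n' \<Longrightarrow> B k l \<in> K) \<Longrightarrow> (\<And>l. l < n' \<Longrightarrow> Cv l \<in> K) \<Longrightarrow>
  sm (\<lambda>k. A k \<otimes> sm (\<lambda>l. B k l \<otimes> Cv l) n') n = sm (\<lambda>l. sm (\<lambda>k. A k \<otimes> B k l) n \<otimes> Cv l) n'"
proof -
  assume K1: "\<And>k. k < n \<Longrightarrow> A k \<in> K" and K2: "\<And>k l. k < n \<Longrightarrow> l < n' \<Longrightarrow> B k l \<in> K" and K3: "\<And>l. l < n' \<Longrightarrow> Cv l \<in> K"
  have "sm (\<lambda>k. A k \<otimes> sm (\<lambda>l. B k l \<otimes> Cv l) n') n = sm (\<lambda>k. sm (\<lambda>l. A k \<otimes> (B k l \<otimes> Cv l)) n') n"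
    using K1 K2 K3 by (simp add: sm_ml_l)
  also have "\<dots> = sm (\<lambda>l. sm (\<lambda>k. A k \<otimes> (B k l \<otimes> Cv l)) n) n'"
    using K1 K2 K3 by (intro sm_swap) auto
  also have "\<dots> = sm (\<lambda>l. sm (\<lambda>k. A k \<otimes> B k l) n \<otimes> Cv l) n'"
    using K1 K2 K3 by (simp add: sm_ml_r2)
  finally show ?thesis .
qed

lemma gs_ind:
  "(\<And>i j. i < n \<Longrightarrow> j < n \<Longrightarrow> M i j \<in> K) \<Longrightarrow> (\<And>i. i < n \<Longrightarrow> y i \<in> K) \<Longrightarrow>
   (\<And>i. i < n \<Longrightarrow> sm (\<lambda>k. M i k \<otimes> y k) n \<preceq> y i) \<Longrightarrow> i < n \<Longrightarrow>
   sm (\<lambda>k. gs n M i k \<otimes> y k) n \<preceq> y i"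
proof (induction n arbitrary: M y i)
  case 0 then show ?case by simp
next
  case (Suc n)
  have MK[simp]: "\<And>i j. i < Suc n \<Longrightarrow> j < Suc n \<Longrightarrow> M i j \<in> K" by (rule Suc.prems)
  have yK[simp]: "\<And>i. i < Suc n \<Longrightarrow> y i \<in> K" by (rule Suc.prems)
  have SK[simp]: "\<And>i j. i < Suc n \<Longrightarrow> j < Suc n \<Longrightarrow> gs (Suc n) M i j \<in> K" by (rule gs_K) auto
  define a where "a = M 0 0"
  define b where "b = (\<lambda>j. M 0 (Suc j))"
  define c where "c = (\<lambda>i. M (Suc i) 0)"
  define D where "D = (\<lambda>i j. M (Suc i) (Suc j))"
  define Ds where "Ds = gs n D"
  define bD where "bD = (\<lambda>j. sm (\<lambda>k. b k \<otimes> Ds k j) n)"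
  define Dc where "Dc = (\<lambda>i. sm (\<lambda>k. Ds i k \<otimes> c k) n)"
  define f where "f = a \<oplus> sm (\<lambda>k. bD k \<otimes> c k) n"
  define fs where "fs = st f"
  define y0 where "y0 = y 0"
  define y' where "y' = (\<lambda>k. y (Suc k))"
  have aK[simp]: "a \<in> K" and bK[simp]: "\<And>k. k < n \<Longrightarrow> b k \<in> K" and cK[simp]: "\<And>k. k < n \<Longrightarrow> c k \<in> K"
    and DK[simp]: "\<And>i j. i < n \<Longrightarrow> j < n \<Longrightarrow> D i j \<in> K"
    and y0K[simp]: "y0 \<in> K" and y'K[simp]: "\<And>k. k < n \<Longrightarrow> y' k \<in> K"
    by (auto simp: a_def b_def c_def D_def y0_def y'_def)
  have DsK[simp]: "\<And>i j. i < n \<Longrightarrow> j < n \<Longrightarrow> Ds i j \<in> K"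
    unfolding Ds_def by (rule gs_K) auto
  have bDK[simp]: "\<And>j. j < n \<Longrightarrow> bD j \<in> K" and DcK[simp]: "\<And>i. i < n \<Longrightarrow> Dc i \<in> K"
    by (auto simp: bD_def Dc_def)
  have fK[simp]: "f \<in> K" and fsK[simp]: "fs \<in> K" by (auto simp: f_def fs_def)
  have S00: "gs (Suc n) M 0 0 = fs"
    and S0j: "\<And>j. gs (Suc n) M 0 (Suc j) = fs \<otimes> bD j"
    and Si0: "\<And>i. gs (Suc n) M (Suc i) 0 = Dc i \<otimes> fs"
    and Sij: "\<And>i j. gs (Suc n) M (Suc i) (Suc j) = Ds i j \<oplus> Dc i \<otimes> fs \<otimes> bD j"
    unfolding gs_Suc_blocks fs_def f_def bD_def Dc_def a_def b_def c_def Ds_def D_def by simp_all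
  have H1: "sm (\<lambda>k. b k \<otimes> Dc k) n = sm (\<lambda>k. bD k \<otimes> c k) n"
    unfolding Dc_def bD_def by (rule sm_assoc) auto
  have r0: "a \<otimes> y0 \<oplus> sm (\<lambda>k. b k \<otimes> y' k) n \<preceq> y0"
  proof -
    have "sm (\<lambda>k. M 0 k \<otimes> y k) (Suc n) \<preceq> y 0" by (rule Suc.prems(3)) simp
    then show ?thesis by (subst (asm) sm_front) (auto simp: a_def b_def y0_def y'_def)
  qed
  have rS: "\<And>i. i < n \<Longrightarrow> c i \<otimes> y0 \<oplus> sm (\<lambda>k. D i k \<otimes> y' k) n \<preceq> y' i"
  proof -
    fix i assume i: "i < n"
    show "c i \<otimes> y0 \<oplus> sm (\<lambda>k. D i k \<otimes> y' k) n \<preceq> y' i"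
    proof -
      have "sm (\<lambda>k. M (Suc i) k \<otimes> y k) (Suc n) \<preceq> y (Suc i)" by (rule Suc.prems(3)) (simp add: i)
      then show ?thesis using i by (subst (asm) sm_front) (auto simp: c_def D_def y0_def y'_def)
    qed
  qed
  have h1: "a \<otimes> y0 \<preceq> y0" and h2: "sm (\<lambda>k. b k \<otimes> y' k) n \<preceq> y0"
    using r0 by (auto simp: pl_lq_iff)
  have h3: "\<And>i. i < n \<Longrightarrow> c i \<otimes> y0 \<preceq> y' i" and h4: "\<And>i. i < n \<Longrightarrow> sm (\<lambda>k. D i k \<otimes> y' k) n \<preceq> y' i"
    using rS by (auto simp: pl_lq_iff)
  have h5: "\<And>i. i < n \<Longrightarrow> sm (\<lambda>k. Ds i k \<otimes> y' k) n \<preceq> y' i"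
    unfolding Ds_def by (rule Suc.IH) (auto simp: h4)
  have h6: "\<And>i. i < n \<Longrightarrow> Dc i \<otimes> y0 \<preceq> y' i"
  proof -
    fix i assume i: "i < n"
    have e1: "Dc i \<otimes> y0 = sm (\<lambda>k. Ds i k \<otimes> (c k \<otimes> y0)) n"
      unfolding Dc_def using i by (simp add: sm_ml_r2)
    have l1: "sm (\<lambda>k. Ds i k \<otimes> (c k \<otimes> y0)) n \<preceq> sm (\<lambda>k. Ds i k \<otimes> y' k) n"
      using i h3 by (intro sm_mono ml_mono_r) auto
    have l2: "sm (\<lambda>k. Ds i k \<otimes> y' k) n \<preceq> y' i" using h5 i by simp
    show "Dc i \<otimes> y0 \<preceq> y' i" unfolding e1 by (rule lq_trans[OF l1 l2]) (use i in auto)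
  qed
  have h7: "f \<otimes> y0 \<preceq> y0"
  proof -
    have e1: "f \<otimes> y0 = a \<otimes> y0 \<oplus> sm (\<lambda>k. b k \<otimes> (Dc k \<otimes> y0)) n"
      unfolding f_def H1[symmetric] by (simp add: distr sm_ml_r2)
    have l1: "a \<otimes> y0 \<oplus> sm (\<lambda>k. b k \<otimes> (Dc k \<otimes> y0)) n \<preceq> a \<otimes> y0 \<oplus> sm (\<lambda>k. b k \<otimes> y' k) n"
      using h6 by (intro pl_mono sm_mono ml_mono_r) auto
    show ?thesis unfolding e1 by (rule lq_trans[OF l1 r0]) auto
  qed
  have h8: "fs \<otimes> y0 \<preceq> y0" using h7 unfolding fs_def lq_def by (intro star_ind) auto
  have h9: "sm (\<lambda>l. bD l \<otimes> y' l) n \<preceq> y0"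
  proof -
    have e1: "sm (\<lambda>l. bD l \<otimes> y' l) n = sm (\<lambda>k. b k \<otimes> sm (\<lambda>l. Ds k l \<otimes> y' l) n) n"
      unfolding bD_def by (rule sm_assoc[symmetric]) auto
    have l1: "sm (\<lambda>k. b k \<otimes> sm (\<lambda>l. Ds k l \<otimes> y' l) n) n \<preceq> sm (\<lambda>k. b k \<otimes> y' k) n"
      using h5 by (intro sm_mono ml_mono_r) auto
    show ?thesis unfolding e1 by (rule lq_trans[OF l1 h2]) auto
  qed
  show ?case
  proof (cases i)
    case 0
    have e1: "sm (\<lambda>k. gs (Suc n) M i k \<otimes> y k) (Suc n) = fs \<otimes> y0 \<oplus> fs \<otimes> sm (\<lambda>l. bD l \<otimes> y' l) n"
      using 0 by (subst sm_front) (auto simp: S00 S0j y0_def y'_def sm_ml_l ml_assoc)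
    have l1: "fs \<otimes> y0 \<oplus> fs \<otimes> sm (\<lambda>l. bD l \<otimes> y' l) n \<preceq> fs \<otimes> y0 \<oplus> fs \<otimes> y0" using h9 by (intro pl_mono ml_mono_r) auto
    have l2: "fs \<otimes> y0 \<oplus> fs \<otimes> y0 \<preceq> y0" using h8 by simp
    have "sm (\<lambda>k. gs (Suc n) M i k \<otimes> y k) (Suc n) \<preceq> y0" unfolding e1 by (rule lq_trans[OF l1 l2]) auto
    then show ?thesis using 0 y0_def by simp
  next
    case (Suc i')
    have i': "i' < n" using Suc Suc.prems by simp
    have e1: "sm (\<lambda>k. gs (Suc n) M i k \<otimes> y k) (Suc n) = Dc i' \<otimes> fs \<otimes> y0 \<oplus> (sm (\<lambda>l. Ds i' l \<otimes> y' l) n \<oplus> Dc i' \<otimes> fs \<otimes> sm (\<lambda>l. bD l \<otimes> y' l) n)"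
      using Suc i' by (subst sm_front) (auto simp: Si0 Sij y0_def y'_def sm_ml_l ml_assoc distr sm_plus)
    have l1: "Dc i' \<otimes> fs \<otimes> y0 \<oplus> (sm (\<lambda>l. Ds i' l \<otimes> y' l) n \<oplus> Dc i' \<otimes> fs \<otimes> sm (\<lambda>l. bD l \<otimes> y' l) n) \<preceq> Dc i' \<otimes> y0 \<oplus> (y' i' \<oplus> Dc i' \<otimes> y0)"
    proof -
      have 1: "Dc i' \<otimes> fs \<otimes> y0 \<preceq> Dc i' \<otimes> y0" using h8 i' by (simp add: ml_assoc ml_mono_r)
      have 2: "Dc i' \<otimes> fs \<otimes> sm (\<lambda>l. bD l \<otimes> y' l) n \<preceq> Dc i' \<otimes> fs \<otimes> y0" using h9 i' by (intro ml_mono_r) auto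
      have 3: "Dc i' \<otimes> fs \<otimes> sm (\<lambda>l. bD l \<otimes> y' l) n \<preceq> Dc i' \<otimes> y0"
        by (rule lq_trans[OF 2 1]) (use i' in auto)
      show ?thesis using 1 3 h5 i' by (intro pl_mono) auto
    qed
    have l2: "Dc i' \<otimes> y0 \<oplus> (y' i' \<oplus> Dc i' \<otimes> y0) \<preceq> y' i'" using h6 i' by (simp add: pl_lq_iff)
    have "sm (\<lambda>k. gs (Suc n) M i k \<otimes> y k) (Suc n) \<preceq> y' i'" unfolding e1 by (rule lq_trans[OF l1 l2]) (use i' in auto)
    then show ?thesis using Suc y'_def by simp
  qed
qed

end


section \<open>Languages\<close>

lemma lconc_assoc: "lconc (lconc a b) c = lconc a (lconc b c)"
  unfolding lconc_def by (auto, metis append.assoc, metis append.assoc)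

lemma lconc_eps_l[simp]: "lconc {[]} a = a" unfolding lconc_def by auto
lemma lconc_eps_r[simp]: "lconc a {[]} = a" unfolding lconc_def by auto
lemma lconc_empty_l[simp]: "lconc {} a = {}" unfolding lconc_def by auto
lemma lconc_empty_r[simp]: "lconc a {} = {}" unfolding lconc_def by auto
lemma lconc_Un_l: "lconc (a \<union> b) c = lconc a c \<union> lconc b c" unfolding lconc_def by auto
lemma lconc_Un_r: "lconc c (a \<union> b) = lconc c a \<union> lconc c b" unfolding lconc_def by auto
lemma lconc_Union_l: "lconc (\<Union>A) c = \<Union>{lconc a c | a. a \<in> A}" unfolding lconc_def by blast
lemma lconc_Union_r: "lconc c (\<Union>A) = \<Union>{lconc c a | a. a \<in> A}" unfolding lconc_def by blast
lemma lconc_single: "lconc {u} {v} = {u @ v}" unfolding lconc_def by auto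

lemma lstar_unfold: "lstar x = {[]} \<union> lconc x (lstar x)"
proof -
  have "lconc x (lstar x) = (\<Union>n. lpow x (Suc n))"
    unfolding lstar_def lconc_Union_r by auto
  moreover have "(\<Union>n. lpow x n) = lpow x 0 \<union> (\<Union>n. lpow x (Suc n))"
  proof (rule equalityI)
    show "(\<Union>n. lpow x n) \<subseteq> lpow x 0 \<union> (\<Union>n. lpow x (Suc n))"
    proof
      fix w assume "w \<in> (\<Union>n. lpow x n)"
      then obtain n where "w \<in> lpow x n" by blast
      then show "w \<in> lpow x 0 \<union> (\<Union>n. lpow x (Suc n))" by (cases n) auto
    qed
  qed (auto, rule exI[of _ 0], simp, metis lpow.simps(2))
  ultimately show ?thesis unfolding lstar_def by simp
qed

lemma lpow_sub_lstar: "lpow x n \<subseteq> lstar x" unfolding lstar_def by auto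

section \<open>Regularity\<close>

lemma RD_simps[simp]:
  "{} \<in> RD m" "{[]} \<in> RD m"
  "a \<in> RD m \<Longrightarrow> b \<in> RD m \<Longrightarrow> a \<union> b \<in> RD m"
  "a \<in> RD m \<Longrightarrow> b \<in> RD m \<Longrightarrow> lconc a b \<in> RD m"
  "a \<in> RD m \<Longrightarrow> lstar a \<in> RD m"
  unfolding RD_def by (auto intro: regl.intros)

lemma RD_P[simp]: "i < m \<Longrightarrow> {[P i]} \<in> RD m" and RD_Q[simp]: "i < m \<Longrightarrow> {[Q i]} \<in> RD m"
  unfolding RD_def by (auto intro: regl.intros)

lemma lpow_RD[simp]: "a \<in> RD m \<Longrightarrow> lpow a n \<in> RD m"
  by (induction n) auto

lemma setprod_sub: "A \<subseteq> RD m \<Longrightarrow> B \<subseteq> RD m \<Longrightarrow> setprod A B \<subseteq> RD m"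
  unfolding setprod_def using RD_simps(4) by blast

lemma setpow_sub: "A \<subseteq> RD m \<Longrightarrow> setpow A n \<subseteq> RD m"
  by (induction n) (auto intro: setprod_sub[THEN subsetD])

lemma ratsub_sub: "ratsub m A \<Longrightarrow> A \<subseteq> RD m"
  by (induction rule: ratsub.induct) (auto simp: setstar_def dest: setprod_sub setpow_sub)

lemma Union_setprod: "\<Union>(setprod A B) = lconc (\<Union>A) (\<Union>B)"
  unfolding setprod_def lconc_def by blast

lemma Union_setpow: "\<Union>(setpow A n) = lpow (\<Union>A) n"
  by (induction n) (auto simp: Union_setprod)

lemma Union_setstar: "\<Union>(setstar A) = lstar (\<Union>A)"
  unfolding setstar_def lstar_def by (auto simp flip: Union_setpow)

lemma finite_Union_RD: "finite A \<Longrightarrow> A \<subseteq> RD m \<Longrightarrow> \<Union>A \<in> RD m"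
  by (induction rule: finite_induct) auto

lemma ratsub_Union: "ratsub m A \<Longrightarrow> \<Union>A \<in> RD m"
  by (induction rule: ratsub.induct) (auto simp: finite_Union_RD Union_setprod Union_setstar)

lemma setpow_single: "setpow {x} n = {lpow x n}"
  by (induction n) (auto simp: setprod_def)

lemma setstar_single: "setstar {x} = range (lpow x)"
  unfolding setstar_def by (auto simp: setpow_single)

lemma ratsub_single: "x \<in> RD m \<Longrightarrow> ratsub m {x}"
  by (rule ratsub_fin) auto

lemma ratsub_star_single: "x \<in> RD m \<Longrightarrow> ratsub m (range (lpow x))"
  using ratsub_star[OF ratsub_single] by (simp add: setstar_single)

lemma ratsub_star_prod: "x \<in> RD m \<Longrightarrow> y \<in> RD m \<Longrightarrow> ratsub m (range (\<lambda>n. lconc (lpow x n) y))"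
proof -
  assume x: "x \<in> RD m" and y: "y \<in> RD m"
  have "setprod (range (lpow x)) {y} = range (\<lambda>n. lconc (lpow x n) y)"
    unfolding setprod_def by auto
  then show ?thesis using ratsub_prod[OF ratsub_star_single[OF x] ratsub_single[OF y]] by simp
qed

section \<open>R-congruences\<close>

lemma Rcong_equiv: "Rcong m \<rho> \<Longrightarrow> equiv (RD m) \<rho>"
  unfolding Rcong_def by simp
lemma Rcong_Un: "Rcong m \<rho> \<Longrightarrow> (a, b) \<in> \<rho> \<Longrightarrow> (c, d) \<in> \<rho> \<Longrightarrow> (a \<union> c, b \<union> d) \<in> \<rho>"
  unfolding Rcong_def by simp
lemma Rcong_conc: "Rcong m \<rho> \<Longrightarrow> (a, b) \<in> \<rho> \<Longrightarrow> (c, d) \<in> \<rho> \<Longrightarrow> (lconc a c, lconc b d) \<in> \<rho>"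
  unfolding Rcong_def by simp
lemma Rcong_sup: "Rcong m \<rho> \<Longrightarrow> ratsub m A \<Longrightarrow> ratsub m B \<Longrightarrow> dclos m \<rho> A = dclos m \<rho> B \<Longrightarrow> (\<Union>A, \<Union>B) \<in> \<rho>"
  unfolding Rcong_def by simp
lemma RcongI: "\<rho> \<subseteq> RD m \<times> RD m \<Longrightarrow> equiv (RD m) \<rho> \<Longrightarrow>
  (\<And>a b c d. (a, b) \<in> \<rho> \<Longrightarrow> (c, d) \<in> \<rho> \<Longrightarrow> (a \<union> c, b \<union> d) \<in> \<rho>) \<Longrightarrow>
  (\<And>a b c d. (a, b) \<in> \<rho> \<Longrightarrow> (c, d) \<in> \<rho> \<Longrightarrow> (lconc a c, lconc b d) \<in> \<rho>) \<Longrightarrow>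
  (\<And>A B. ratsub m A \<Longrightarrow> ratsub m B \<Longrightarrow> dclos m \<rho> A = dclos m \<rho> B \<Longrightarrow> (\<Union>A, \<Union>B) \<in> \<rho>) \<Longrightarrow> Rcong m \<rho>"
  unfolding Rcong_def by blast

lemma Rcong_total: "Rcong m (RD m \<times> RD m)"
  by (rule RcongI) (auto simp: ratsub_Union equiv_def refl_on_def sym_def trans_def)

lemma QP_RD: "{[Q i, P i] | i. i < m} \<in> RD m"
proof -
  have "\<forall>n\<le>m. {[Q i, P i] | i. i < n} \<in> RD m"
  proof (intro allI impI)
    fix n assume "n \<le> m"
    then show "{[Q i, P i] | i. i < n} \<in> RD m"
    proof (induction n)
      case 0 then show ?case by simp
    next
      case (Suc n)
      have "{[Q i, P i] | i. i < Suc n} = {[Q i, P i] | i. i < n} \<union> lconc {[Q n]} {[P n]}"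
        by (auto simp: lconc_single less_Suc_eq)
      then show ?case using Suc by simp
    qed
  qed
  then show ?thesis by simp
qed

lemma gens_RD: "gens m \<subseteq> RD m \<times> RD m"
proof -
  have "\<And>i j. i < m \<Longrightarrow> j < m \<Longrightarrow> {[P i, Q j]} \<in> RD m"
    by (metis RD_simps(4) RD_P RD_Q append_Cons append_Nil lconc_single)
  then show ?thesis unfolding gens_def using QP_RD by auto
qed

lemma dclos_eq:
  assumes R: "Rcong m \<rho>" and A: "A \<subseteq> RD m" and B: "B \<subseteq> RD m"
    and AB: "\<forall>a\<in>A. \<exists>b\<in>B. (a \<union> b, b) \<in> \<rho>" and BA: "\<forall>b\<in>B. \<exists>a\<in>A. (b \<union> a, a) \<in> \<rho>"
  shows "dclos m \<rho> A = dclos m \<rho> B"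
proof -
  have eq: "equiv (RD m) \<rho>" and cp: "\<And>a b c d. (a, b) \<in> \<rho> \<Longrightarrow> (c, d) \<in> \<rho> \<Longrightarrow> (a \<union> c, b \<union> d) \<in> \<rho>"
    using R Rcong_equiv Rcong_Un by auto
  have lt: "(x \<union> b, b) \<in> \<rho>" if "(x \<union> a, a) \<in> \<rho>" "(a \<union> b, b) \<in> \<rho>" "b \<in> RD m" "x \<in> RD m" for x a b
  proof -
    have bb: "(b, b) \<in> \<rho>" using eq that(3) by (simp add: equiv_def refl_on_def)
    then have "((x \<union> a) \<union> b, a \<union> b) \<in> \<rho>" using cp that(1) by blast
    then have 1: "(x \<union> b \<union> (a \<union> b), a \<union> b) \<in> \<rho>" by (simp add: Un_ac)
    have "x \<union> b \<in> RD m" using that(3,4) by simp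
    then have "(x \<union> b, x \<union> b) \<in> \<rho>" using eq by (simp add: equiv_def refl_on_def)
    then have 2: "(x \<union> b \<union> (a \<union> b), x \<union> b \<union> b) \<in> \<rho>" using cp that(2) by blast
    have xbb: "x \<union> b \<union> b = x \<union> b" by blast
    have sy: "sym \<rho>" and tr: "trans \<rho>" using eq unfolding equiv_def by auto
    have "(x \<union> b, x \<union> b \<union> (a \<union> b)) \<in> \<rho>" using symD[OF sy 2] unfolding xbb .
    then have "(x \<union> b, a \<union> b) \<in> \<rho>" using transD[OF tr _ 1] by blast
    then show ?thesis using transD[OF tr _ that(2)] by blast
  qed
  have sub: "dclos m \<rho> A' \<subseteq> dclos m \<rho> B'"
    if B': "B' \<subseteq> RD m" and AB': "\<forall>a\<in>A'. \<exists>b\<in>B'. (a \<union> b, b) \<in> \<rho>" for A' B'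
  proof
    fix X assume "X \<in> dclos m \<rho> A'"
    then obtain x a where X: "X = \<rho> `` {x}" and x: "x \<in> RD m" and a: "a \<in> A'" and xa: "(x \<union> a, a) \<in> \<rho>"
      unfolding dclos_def by blast
    obtain b where b: "b \<in> B'" and ab: "(a \<union> b, b) \<in> \<rho>" using AB' a by blast
    have "(x \<union> b, b) \<in> \<rho>" using lt[OF xa ab] b B' x by blast
    then show "X \<in> dclos m \<rho> B'" unfolding dclos_def using X x b by blast
  qed
  show ?thesis using sub[OF B AB] sub[OF A BA] by blast
qed

lemma Rcong_rho: "Rcong m (rho m)" and gens_rho: "gens m \<subseteq> rho m"
proof -
  define F where "F = {\<rho>. Rcong m \<rho> \<and> gens m \<subseteq> \<rho>}"
  have tot: "RD m \<times> RD m \<in> F" unfolding F_def using Rcong_total gens_RD by auto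
  have r: "rho m = \<Inter>F" unfolding rho_def F_def by simp
  have FR: "\<And>\<rho>. \<rho> \<in> F \<Longrightarrow> Rcong m \<rho>" unfolding F_def by auto
  have Feq: "\<And>\<rho>. \<rho> \<in> F \<Longrightarrow> equiv (RD m) \<rho>" using FR Rcong_equiv by blast
  have Fcp: "\<And>\<rho> a b c d. \<rho> \<in> F \<Longrightarrow> (a, b) \<in> \<rho> \<Longrightarrow> (c, d) \<in> \<rho> \<Longrightarrow> (a \<union> c, b \<union> d) \<in> \<rho> \<and> (lconc a c, lconc b d) \<in> \<rho>"
    using FR Rcong_Un Rcong_conc by blast
  have Fsup: "\<And>\<rho> A B. \<rho> \<in> F \<Longrightarrow> ratsub m A \<Longrightarrow> ratsub m B \<Longrightarrow> dclos m \<rho> A = dclos m \<rho> B \<Longrightarrow> (\<Union>A, \<Union>B) \<in> \<rho>"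
    using FR Rcong_sup by blast
  show "gens m \<subseteq> rho m" unfolding r F_def by auto
  have sub: "\<Inter>F \<subseteq> RD m \<times> RD m" using tot by auto
  have eqv: "equiv (RD m) (\<Inter>F)"
  proof (rule equivI)
    show "\<Inter>F \<subseteq> RD m \<times> RD m" by (rule sub)
    show "refl_on (RD m) (\<Inter>F)" unfolding refl_on_def using Feq by (auto simp: equiv_def refl_on_def)
    show "sym (\<Inter>F)" unfolding sym_def using Feq by (auto simp: equiv_def sym_def)
    show "trans (\<Inter>F)" unfolding trans_def using Feq by (auto simp: equiv_def trans_def)
  qed
  have cp: "\<And>a b c d. (a, b) \<in> \<Inter>F \<Longrightarrow> (c, d) \<in> \<Inter>F \<Longrightarrow> (a \<union> c, b \<union> d) \<in> \<Inter>F \<and> (lconc a c, lconc b d) \<in> \<Inter>F"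
    using Fcp by blast
  have elem: "\<forall>a\<in>A. \<exists>b\<in>B. \<forall>\<rho>\<in>F. (a \<union> b, b) \<in> \<rho>"
    if A: "A \<subseteq> RD m" and B: "B \<subseteq> RD m" and d: "dclos m (\<Inter>F) A = dclos m (\<Inter>F) B" for A B
  proof
    fix a assume a: "a \<in> A"
    have aR: "a \<in> RD m" using a A by auto
    have "(a \<union> a, a) \<in> \<Inter>F" using eqv aR by (simp add: equiv_def refl_on_def)
    then have "\<Inter>F `` {a} \<in> dclos m (\<Inter>F) A" unfolding dclos_def using a aR by blast
    then have "\<Inter>F `` {a} \<in> dclos m (\<Inter>F) B" using d by simp
    then obtain x b where x: "x \<in> RD m" and b: "b \<in> B" and cl: "\<Inter>F `` {a} = \<Inter>F `` {x}" and xb: "(x \<union> b, b) \<in> \<Inter>F"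
      unfolding dclos_def by blast
    have ax: "(a, x) \<in> \<Inter>F" using cl eqv aR x by (simp add: eq_equiv_class_iff)
    have bR: "b \<in> RD m" using b B by auto
    show "\<exists>b\<in>B. \<forall>\<rho>\<in>F. (a \<union> b, b) \<in> \<rho>"
    proof (intro bexI[OF _ b] ballI)
      fix \<rho> assume \<rho>: "\<rho> \<in> F"
      have "(b, b) \<in> \<rho>" using Feq[OF \<rho>] bR by (simp add: equiv_def refl_on_def)
      then have "(a \<union> b, x \<union> b) \<in> \<rho>" using Fcp[OF \<rho>] ax \<rho> by blast
      moreover have "(x \<union> b, b) \<in> \<rho>" using xb \<rho> by blast
      ultimately show "(a \<union> b, b) \<in> \<rho>" using Feq[OF \<rho>] unfolding equiv_def trans_def by blast
    qed
  qed
  have sup: "(\<Union>A, \<Union>B) \<in> \<Inter>F" if A: "ratsub m A" and B: "ratsub m B" and d: "dclos m (\<Inter>F) A = dclos m (\<Inter>F) B" for A B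
  proof
    fix \<rho> assume \<rho>: "\<rho> \<in> F"
    have AR: "A \<subseteq> RD m" and BR: "B \<subseteq> RD m" using A B ratsub_sub by auto
    have "dclos m \<rho> A = dclos m \<rho> B"
      using dclos_eq[OF FR[OF \<rho>] AR BR] elem[OF AR BR d] elem[OF BR AR d[symmetric]] \<rho> by blast
    then show "(\<Union>A, \<Union>B) \<in> \<rho>" using Fsup[OF \<rho> A B] by simp
  qed
  show "Rcong m (rho m)" unfolding r
  proof (rule RcongI)
    show "\<Inter>F \<subseteq> RD m \<times> RD m" by (rule sub)
    show "equiv (RD m) (\<Inter>F)" by (rule eqv)
    show "\<And>a b c d. (a, b) \<in> \<Inter>F \<Longrightarrow> (c, d) \<in> \<Inter>F \<Longrightarrow> (a \<union> c, b \<union> d) \<in> \<Inter>F"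
      by (rule cp[THEN conjunct1])
    show "\<And>a b c d. (a, b) \<in> \<Inter>F \<Longrightarrow> (c, d) \<in> \<Inter>F \<Longrightarrow> (lconc a c, lconc b d) \<in> \<Inter>F"
      by (rule cp[THEN conjunct2])
    show "\<And>A B. ratsub m A \<Longrightarrow> ratsub m B \<Longrightarrow> dclos m (\<Inter>F) A = dclos m (\<Inter>F) B \<Longrightarrow> (\<Union>A, \<Union>B) \<in> \<Inter>F"
      by (rule sup)
  qed
qed

lemma rho_equiv: "equiv (RD m) (rho m)" using Rcong_rho Rcong_equiv by blast
lemma rho_RD: "(a, b) \<in> rho m \<Longrightarrow> a \<in> RD m \<and> b \<in> RD m" using rho_equiv unfolding equiv_def by auto
lemma rho_refl: "x \<in> RD m \<Longrightarrow> (x, x) \<in> rho m" using rho_equiv unfolding equiv_def refl_on_def by auto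
lemma rho_sym: "(x, y) \<in> rho m \<Longrightarrow> (y, x) \<in> rho m" using rho_equiv unfolding equiv_def sym_def by auto
lemma rho_trans: "(x, y) \<in> rho m \<Longrightarrow> (y, w) \<in> rho m \<Longrightarrow> (x, w) \<in> rho m" using rho_equiv unfolding equiv_def trans_def by blast
lemma rho_Un: "(a, b) \<in> rho m \<Longrightarrow> (c, d) \<in> rho m \<Longrightarrow> (a \<union> c, b \<union> d) \<in> rho m" using Rcong_rho Rcong_Un by blast
lemma rho_conc: "(a, b) \<in> rho m \<Longrightarrow> (c, d) \<in> rho m \<Longrightarrow> (lconc a c, lconc b d) \<in> rho m" using Rcong_rho Rcong_conc by blast

lemma rho_sup: "ratsub m A \<Longrightarrow> ratsub m B \<Longrightarrow> \<forall>a\<in>A. \<exists>b\<in>B. (a \<union> b, b) \<in> rho m \<Longrightarrow> \<forall>b\<in>B. \<exists>a\<in>A. (b \<union> a, a) \<in> rho m \<Longrightarrow>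
  (\<Union>A, \<Union>B) \<in> rho m"
  using Rcong_sup[OF Rcong_rho] dclos_eq[OF Rcong_rho ratsub_sub ratsub_sub] by blast

lemma rho_lpow: "(x, y) \<in> rho m \<Longrightarrow> (lpow x n, lpow y n) \<in> rho m"
  by (induction n) (auto intro: rho_refl rho_conc)

lemma rho_le_of_eq: "(a, b) \<in> rho m \<Longrightarrow> (a \<union> b, b) \<in> rho m"
  using rho_Un[of a b m b b] rho_refl rho_RD by fastforce

lemma rho_star: "(x, y) \<in> rho m \<Longrightarrow> (lstar x, lstar y) \<in> rho m"
proof -
  assume xy: "(x, y) \<in> rho m"
  have x: "x \<in> RD m" and y: "y \<in> RD m" using rho_RD[OF xy] by auto
  have "(\<Union>(range (lpow x)), \<Union>(range (lpow y))) \<in> rho m"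
  proof (rule rho_sup[OF ratsub_star_single[OF x] ratsub_star_single[OF y]])
    show "\<forall>a\<in>range (lpow x). \<exists>b\<in>range (lpow y). (a \<union> b, b) \<in> rho m"
      using rho_le_of_eq[OF rho_lpow[OF xy]] by blast
    show "\<forall>a\<in>range (lpow y). \<exists>b\<in>range (lpow x). (a \<union> b, b) \<in> rho m"
      using rho_le_of_eq[OF rho_lpow[OF rho_sym[OF xy]]] by blast
  qed
  then show ?thesis unfolding lstar_def by simp
qed



abbreviation cl :: "nat \<Rightarrow> lang \<Rightarrow> cls" where "cl m x \<equiv> rho m `` {x}"

lemma C_cases: "X \<in> C m \<Longrightarrow> (\<And>x. X = cl m x \<Longrightarrow> x \<in> RD m \<Longrightarrow> thesis) \<Longrightarrow> thesis"
  unfolding C_def by (erule quotientE)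

lemma cl_C[simp]: "x \<in> RD m \<Longrightarrow> cl m x \<in> C m"
  unfolding C_def by (rule quotientI)

lemma cl_eq: "x \<in> RD m \<Longrightarrow> y \<in> RD m \<Longrightarrow> cl m x = cl m y \<longleftrightarrow> (x, y) \<in> rho m"
  using eq_equiv_class_iff[OF rho_equiv] by blast

lemma cl_eqI: "(x, y) \<in> rho m \<Longrightarrow> cl m x = cl m y"
  using equiv_class_eq[OF rho_equiv] by blast

lemma cl_lift2:
  assumes x: "x \<in> RD m" and y: "y \<in> RD m"
    and F: "\<And>x' y'. (x, x') \<in> rho m \<Longrightarrow> (y, y') \<in> rho m \<Longrightarrow> (F x y, F x' y') \<in> rho m"
  shows "(\<Union>x'\<in>cl m x. \<Union>y'\<in>cl m y. rho m `` {F x' y'}) = cl m (F x y)"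
proof -
  have 1: "\<And>x' y'. x' \<in> cl m x \<Longrightarrow> y' \<in> cl m y \<Longrightarrow> rho m `` {F x' y'} = cl m (F x y)"
    using F cl_eqI rho_sym by auto
  have 2: "cl m x \<noteq> {}" "cl m y \<noteq> {}" using x y rho_refl by auto
  have "(\<Union>x'\<in>cl m x. \<Union>y'\<in>cl m y. rho m `` {F x' y'}) = (\<Union>x'\<in>cl m x. \<Union>y'\<in>cl m y. cl m (F x y))"
    using 1 by (intro SUP_cong refl) auto
  also have "\<dots> = cl m (F x y)" using 2 by (simp only: UN_constant if_False)
  finally show ?thesis .
qed

lemma cadd_cl[simp]: "x \<in> RD m \<Longrightarrow> y \<in> RD m \<Longrightarrow> cadd m (cl m x) (cl m y) = cl m (x \<union> y)"
  unfolding cadd_def by (rule cl_lift2) (auto intro: rho_Un)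

lemma cmul_cl[simp]: "x \<in> RD m \<Longrightarrow> y \<in> RD m \<Longrightarrow> cmul m (cl m x) (cl m y) = cl m (lconc x y)"
  unfolding cmul_def by (rule cl_lift2) (auto intro: rho_conc)

lemma cstar_cl[simp]: "x \<in> RD m \<Longrightarrow> cstar m (cl m x) = cl m (lstar x)"
proof -
  assume x: "x \<in> RD m"
  have 1: "\<And>x'. x' \<in> cl m x \<Longrightarrow> rho m `` {lstar x'} = cl m (lstar x)"
    using cl_eqI rho_sym rho_star by auto
  have 2: "cl m x \<noteq> {}" using x rho_refl by auto
  have "(\<Union>x'\<in>cl m x. rho m `` {lstar x'}) = (\<Union>x'\<in>cl m x. cl m (lstar x))"
    using 1 by (intro SUP_cong refl) auto
  also have "\<dots> = cl m (lstar x)" using 2 by (simp only: UN_constant if_False)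
  finally show ?thesis unfolding cstar_def .
qed

lemma star_ind_lang:
  assumes x: "x \<in> RD m" and y: "y \<in> RD m" and h: "(lconc x y \<union> y, y) \<in> rho m"
  shows "(lconc (lstar x) y \<union> y, y) \<in> rho m"
proof -
  have pw: "(lconc (lpow x n) y \<union> y, y) \<in> rho m" for n
  proof (induction n)
    case 0 then show ?case using y by (simp add: rho_refl)
  next
    case (Suc n)
    define u where "u = lconc (lpow x n) y"
    have uR: "u \<in> RD m" using x y u_def by simp
    have 1: "(lconc x (u \<union> y), lconc x y) \<in> rho m" using rho_conc[OF rho_refl[OF x] Suc[folded u_def]] .
    have 2: "(lconc x u \<union> y, lconc x u \<union> (lconc x y \<union> y)) \<in> rho m"
      using rho_Un[OF rho_refl[of "lconc x u"] rho_sym[OF h]] x uR by simp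
    have 3: "(lconc x u \<union> (lconc x y \<union> y), lconc x y \<union> y) \<in> rho m"
      using rho_Un[OF 1 rho_refl[OF y]] by (simp add: lconc_Un_r Un_assoc)
    have "(lconc x u \<union> y, y) \<in> rho m" using rho_trans[OF rho_trans[OF 2 3] h] .
    then show ?case by (simp add: u_def lconc_assoc)
  qed
  have "(\<Union>(range (\<lambda>n. lconc (lpow x n) y)), \<Union>{y}) \<in> rho m"
  proof (rule rho_sup[OF ratsub_star_prod[OF x y] ratsub_single[OF y]])
    show "\<forall>a\<in>range (\<lambda>n. lconc (lpow x n) y). \<exists>b\<in>{y}. (a \<union> b, b) \<in> rho m" using pw by auto
    show "\<forall>b\<in>{y}. \<exists>a\<in>range (\<lambda>n. lconc (lpow x n) y). (b \<union> a, a) \<in> rho m"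
    proof -
      have "(y \<union> lconc (lpow x 0) y, lconc (lpow x 0) y) \<in> rho m" using y by (simp add: rho_refl)
      then show ?thesis by blast
    qed
  qed
  moreover have "\<Union>(range (\<lambda>n. lconc (lpow x n) y)) = lconc (lstar x) y"
    unfolding lstar_def lconc_Union_l by auto
  ultimately have "(lconc (lstar x) y, y) \<in> rho m" by simp
  then show ?thesis using rho_le_of_eq by blast
qed

lemma czero_cl: "czero m = cl m {}" by (simp add: czero_def)
lemma cone_cl: "cone m = cl m {[]}" by (simp add: cone_def)

lemma C_ex: "X \<in> C m \<Longrightarrow> \<exists>x. x \<in> RD m \<and> X = cl m x"
  by (metis C_cases)

lemma C2: "x \<in> C m \<Longrightarrow> y \<in> C m \<Longrightarrow> (\<And>a b. a \<in> RD m \<Longrightarrow> b \<in> RD m \<Longrightarrow> Pr (cl m a) (cl m b)) \<Longrightarrow> Pr x y"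
  using C_ex by metis

lemma C3: "x \<in> C m \<Longrightarrow> y \<in> C m \<Longrightarrow> w \<in> C m \<Longrightarrow> (\<And>a b c. a \<in> RD m \<Longrightarrow> b \<in> RD m \<Longrightarrow> c \<in> RD m \<Longrightarrow> Pr (cl m a) (cl m b) (cl m c)) \<Longrightarrow> Pr x y w"
  using C_ex by metis

lemma C1: "x \<in> C m \<Longrightarrow> (\<And>a. a \<in> RD m \<Longrightarrow> Pr (cl m a)) \<Longrightarrow> Pr x"
  using C_ex by metis

lemma cadd_C[simp]: "x \<in> C m \<Longrightarrow> y \<in> C m \<Longrightarrow> cadd m x y \<in> C m"
  by (rule C2[where Pr="\<lambda>x y. cadd m x y \<in> C m"]) auto
lemma cmul_C[simp]: "x \<in> C m \<Longrightarrow> y \<in> C m \<Longrightarrow> cmul m x y \<in> C m"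
  by (rule C2[where Pr="\<lambda>x y. cmul m x y \<in> C m"]) auto
lemma cstar_C[simp]: "x \<in> C m \<Longrightarrow> cstar m x \<in> C m"
  by (rule C1[where Pr="\<lambda>x. cstar m x \<in> C m"]) auto
lemma czero_C[simp]: "czero m \<in> C m" by (simp add: czero_cl)
lemma cone_C[simp]: "cone m \<in> C m" by (simp add: cone_cl)

lemma ka_C: "ka (C m) (cadd m) (cmul m) (cstar m) (czero m) (cone m)"
proof
  fix x y w assume x: "x \<in> C m" and y: "y \<in> C m" and w: "w \<in> C m"
  show "cadd m (cadd m x y) w = cadd m x (cadd m y w)"
    by (rule C3[OF x y w, where Pr="\<lambda>x y w. cadd m (cadd m x y) w = cadd m x (cadd m y w)"]) (simp add: Un_assoc)
  show "cmul m (cmul m x y) w = cmul m x (cmul m y w)"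
    by (rule C3[OF x y w, where Pr="\<lambda>x y w. cmul m (cmul m x y) w = cmul m x (cmul m y w)"]) (simp add: lconc_assoc)
  show "cmul m x (cadd m y w) = cadd m (cmul m x y) (cmul m x w)"
    by (rule C3[OF x y w, where Pr="\<lambda>x y w. cmul m x (cadd m y w) = cadd m (cmul m x y) (cmul m x w)"]) (simp add: lconc_Un_r)
  show "cmul m (cadd m y w) x = cadd m (cmul m y x) (cmul m w x)"
    by (rule C3[OF x y w, where Pr="\<lambda>x y w. cmul m (cadd m y w) x = cadd m (cmul m y x) (cmul m w x)"]) (simp add: lconc_Un_l)
next
  fix x y assume x: "x \<in> C m" and y: "y \<in> C m"
  show "cadd m x y \<in> C m" "cmul m x y \<in> C m" using x y by simp_all
  show "cadd m x y = cadd m y x"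
    by (rule C2[OF x y, where Pr="\<lambda>x y. cadd m x y = cadd m y x"]) (simp add: Un_commute)
  show "cadd m (cmul m x y) y = y \<Longrightarrow> cadd m (cmul m (cstar m x) y) y = y"
  proof (rule C2[OF x y, where Pr="\<lambda>x y. cadd m (cmul m x y) y = y \<longrightarrow> cadd m (cmul m (cstar m x) y) y = y", rule_format])
    fix a b assume a: "a \<in> RD m" and b: "b \<in> RD m" and h: "cadd m (cmul m (cl m a) (cl m b)) (cl m b) = cl m b"
    then have "(lconc a b \<union> b, b) \<in> rho m" by (simp add: cl_eq)
    then have "(lconc (lstar a) b \<union> b, b) \<in> rho m" using star_ind_lang a b by blast
    then show "cadd m (cmul m (cstar m (cl m a)) (cl m b)) (cl m b) = cl m b" using a b by (simp add: cl_eqI)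
  qed
next
  fix x assume x: "x \<in> C m"
  show "cstar m x \<in> C m" using x by simp
  show "cadd m x x = x" by (rule C1[OF x, where Pr="\<lambda>x. cadd m x x = x"]) simp
  show "cadd m (czero m) x = x" by (rule C1[OF x, where Pr="\<lambda>x. cadd m (czero m) x = x"]) (simp add: czero_cl)
  show "cmul m (cone m) x = x" by (rule C1[OF x, where Pr="\<lambda>x. cmul m (cone m) x = x"]) (simp add: cone_cl)
  show "cmul m x (cone m) = x" by (rule C1[OF x, where Pr="\<lambda>x. cmul m x (cone m) = x"]) (simp add: cone_cl)
  show "cmul m (czero m) x = czero m" by (rule C1[OF x, where Pr="\<lambda>x. cmul m (czero m) x = czero m"]) (simp add: czero_cl)
  show "cmul m x (czero m) = czero m" by (rule C1[OF x, where Pr="\<lambda>x. cmul m x (czero m) = czero m"]) (simp add: czero_cl)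
  show "cadd m (cadd m (cone m) (cmul m x (cstar m x))) (cstar m x) = cstar m x"
  proof (rule C1[OF x, where Pr="\<lambda>x. cadd m (cadd m (cone m) (cmul m x (cstar m x))) (cstar m x) = cstar m x"])
    fix a assume a: "a \<in> RD m"
    have "{[]} \<union> lconc a (lstar a) \<union> lstar a = lstar a" using lstar_unfold[of a] by auto
    moreover have "cadd m (cadd m (cone m) (cmul m (cl m a) (cstar m (cl m a)))) (cstar m (cl m a)) = cl m ({[]} \<union> lconc a (lstar a) \<union> lstar a)"
      using a by (simp only: cone_cl cstar_cl cmul_cl cadd_cl RD_simps)
    ultimately show "cadd m (cadd m (cone m) (cmul m (cl m a) (cstar m (cl m a)))) (cstar m (cl m a)) = cstar m (cl m a)"
      using a by simp
  qed
qed simp_all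



lemma mext_cong: "(\<And>i j. i < m \<Longrightarrow> j < m \<Longrightarrow> F i j = G i j) \<Longrightarrow> mext m F = mext m G"
  unfolding mext_def by (intro ext) simp

lemma mext_in: "i < m \<Longrightarrow> j < m \<Longrightarrow> mext m F i j = F i j"
  unfolding mext_def by auto

lemma mext_out: "\<not> (i < m \<and> j < m) \<Longrightarrow> mext m F i j = {}"
  unfolding mext_def by auto

lemma MatC_mext_eq: "M \<in> MatC m \<Longrightarrow> mext m M = M"
proof (intro ext)
  fix i j assume "M \<in> MatC m"
  then show "mext m M i j = M i j" unfolding MatC_def mext_def by (cases "i < m \<and> j < m") auto
qed

lemma mext_MatC: "(\<And>i j. i < m \<Longrightarrow> j < m \<Longrightarrow> F i j \<in> C m) \<Longrightarrow> mext m F \<in> MatC m"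
  unfolding MatC_def mext_def by auto

interpretation K: ka "C m" "cadd m" "cmul m" "cstar m" "czero m" "cone m" for m
  by (rule ka_C)

lemma sm_cl: "(\<And>i. i < n \<Longrightarrow> f i \<in> RD m) \<Longrightarrow>
  K.sm m (\<lambda>i. cl m (f i)) n = cl m (\<Union>i<n. f i) \<and> (\<Union>i<n. f i) \<in> RD m"
proof (induction n)
  case 0 then show ?case by (simp add: czero_cl)
next
  case (Suc n)
  then have IH: "K.sm m (\<lambda>i. cl m (f i)) n = cl m (\<Union>i<n. f i)" "(\<Union>i<n. f i) \<in> RD m" by auto
  have "(\<Union>i<Suc n. f i) = (\<Union>i<n. f i) \<union> f n" by (auto simp: lessThan_Suc)
  then show ?case using IH Suc.prems by simp
qed


definition pc :: "nat \<Rightarrow> nat \<Rightarrow> cls" where "pc m i = cl m {[P i]}"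
definition qc :: "nat \<Rightarrow> nat \<Rightarrow> cls" where "qc m j = cl m {[Q j]}"
definition hm :: "nat \<Rightarrow> cls \<Rightarrow> cmat" where
  "hm m x = mext m (\<lambda>i j. cmul m (cmul m (pc m i) x) (qc m j))"
definition gm :: "nat \<Rightarrow> cmat \<Rightarrow> cls" where
  "gm m M = K.sm m (\<lambda>i. K.sm m (\<lambda>j. cmul m (cmul m (qc m i) (M i j)) (pc m j)) m) m"

lemma pc_C[simp]: "i < m \<Longrightarrow> pc m i \<in> C m" by (simp add: pc_def)
lemma qc_C[simp]: "i < m \<Longrightarrow> qc m i \<in> C m" by (simp add: qc_def)

lemma pq: "i < m \<Longrightarrow> j < m \<Longrightarrow> cmul m (pc m i) (qc m j) = (if i = j then cone m else czero m)"
proof -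
  assume i: "i < m" and j: "j < m"
  have "cmul m (pc m i) (qc m j) = cl m {[P i, Q j]}"
    using i j by (simp add: pc_def qc_def lconc_single)
  also have "\<dots> = cl m (if i = j then {[]} else {})"
    using gens_rho[of m] i j unfolding gens_def by (intro cl_eqI) blast
  finally show ?thesis by (simp add: cone_cl czero_cl)
qed

lemma qp_sum: "K.sm m (\<lambda>i. cmul m (qc m i) (pc m i)) m = cone m"
proof -
  have "K.sm m (\<lambda>i. cmul m (qc m i) (pc m i)) m = K.sm m (\<lambda>i. cl m {[Q i, P i]}) m"
    by (rule K.sm_cong) (simp add: pc_def qc_def lconc_single)
  also have "\<dots> = cl m (\<Union>i<m. {[Q i, P i]})"
  proof -
    have "\<And>i. i < m \<Longrightarrow> {[Q i, P i]} \<in> RD m"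
      by (metis RD_simps(4) RD_P RD_Q append_Cons append_Nil lconc_single)
    then show ?thesis using sm_cl[of m "\<lambda>i. {[Q i, P i]}" m] by blast
  qed
  also have "(\<Union>i<m. {[Q i, P i]}) = {[Q i, P i] | i. i < m}" by auto
  also have "cl m {[Q i, P i] | i. i < m} = cl m {[]}"
    using gens_rho[of m] unfolding gens_def by (intro cl_eqI) blast
  finally show ?thesis by (simp add: cone_cl)
qed

lemma qp_sum_c: "c \<in> C m \<Longrightarrow> K.sm m (\<lambda>k. cmul m (qc m k) (cmul m (pc m k) c)) m = c"
  by (subst K.sm_ml_r2) (auto simp: qp_sum)

lemma hm_entry: "i < m \<Longrightarrow> j < m \<Longrightarrow> hm m x i j = cmul m (cmul m (pc m i) x) (qc m j)"
  by (simp add: hm_def mext_in)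

lemma hm_MatC: "x \<in> C m \<Longrightarrow> hm m x \<in> MatC m"
  unfolding hm_def by (rule mext_MatC) simp

lemma hm_C[simp]: "x \<in> C m \<Longrightarrow> i < m \<Longrightarrow> j < m \<Longrightarrow> hm m x i j \<in> C m"
  by (simp add: hm_entry)

lemma hm_add: "x \<in> C m \<Longrightarrow> y \<in> C m \<Longrightarrow> hm m (cadd m x y) = madd m (hm m x) (hm m y)"
  unfolding madd_def hm_def by (rule mext_cong) (simp add: mext_in K.distl K.distr)

lemma hm_zero: "hm m (czero m) = mzero m"
  unfolding mzero_def hm_def by (rule mext_cong) simp

lemma hm_one: "hm m (cone m) = mone m"
  unfolding mone_def hm_def by (rule mext_cong) (simp add: pq)

lemma hm_mul: "x \<in> C m \<Longrightarrow> y \<in> C m \<Longrightarrow> hm m (cmul m x y) = mmul m (hm m x) (hm m y)"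
  unfolding mmul_def
proof (subst hm_def, rule mext_cong)
  fix i j assume x: "x \<in> C m" and y: "y \<in> C m" and i: "i < m" and j: "j < m"
  have "K.sm m (\<lambda>k. cmul m (hm m x i k) (hm m y k j)) m
      = K.sm m (\<lambda>k. cmul m (cmul m (pc m i) x) (cmul m (qc m k) (cmul m (pc m k) (cmul m y (qc m j))))) m"
    using x y i j by (intro K.sm_cong) (simp add: hm_entry K.ml_assoc)
  also have "\<dots> = cmul m (cmul m (pc m i) x) (K.sm m (\<lambda>k. cmul m (qc m k) (cmul m (pc m k) (cmul m y (qc m j)))) m)"
    using x y i j by (subst K.sm_ml_l) auto
  also have "\<dots> = cmul m (cmul m (pc m i) x) (cmul m y (qc m j))"
    using x y j by (simp add: qp_sum_c)
  finally show "cmul m (cmul m (pc m i) (cmul m x y)) (qc m j) = K.sm m (\<lambda>k. cmul m (hm m x i k) (hm m y k j)) m"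
    using x y i j by (simp add: K.ml_assoc)
qed


lemma MatC_C: "M \<in> MatC m \<Longrightarrow> i < m \<Longrightarrow> j < m \<Longrightarrow> M i j \<in> C m"
  unfolding MatC_def by auto

lemma gm_C: "M \<in> MatC m \<Longrightarrow> gm m M \<in> C m"
  unfolding gm_def by (auto simp: MatC_C)

lemma gm_hm: "x \<in> C m \<Longrightarrow> gm m (hm m x) = x"
proof -
  assume x: "x \<in> C m"
  have "gm m (hm m x) = K.sm m (\<lambda>i. K.sm m (\<lambda>j. cmul m (qc m i) (cmul m (pc m i) (cmul m x (cmul m (qc m j) (pc m j))))) m) m"
    unfolding gm_def using x by (intro K.sm_cong) (simp add: hm_entry K.ml_assoc)
  also have "\<dots> = K.sm m (\<lambda>i. cmul m (qc m i) (cmul m (pc m i) (cmul m x (K.sm m (\<lambda>j. cmul m (qc m j) (pc m j)) m)))) m"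
    using x by (intro K.sm_cong) (simp add: K.sm_ml_l)
  also have "\<dots> = x" using x by (simp add: qp_sum qp_sum_c)
  finally show ?thesis .
qed

lemma hm_gm: "M \<in> MatC m \<Longrightarrow> hm m (gm m M) = M"
proof -
  assume M: "M \<in> MatC m"
  have MK: "\<And>i j. i < m \<Longrightarrow> j < m \<Longrightarrow> M i j \<in> C m" using M MatC_C by blast
  have "hm m (gm m M) = mext m M"
  proof (unfold hm_def, rule mext_cong)
    fix k l assume k: "k < m" and l: "l < m"
    have "cmul m (cmul m (pc m k) (gm m M)) (qc m l)
        = K.sm m (\<lambda>i. K.sm m (\<lambda>j. cmul m (cmul m (pc m k) (qc m i)) (cmul m (M i j) (cmul m (pc m j) (qc m l)))) m) m"
      unfolding gm_def using k l MK by (simp add: K.sm_ml_l K.sm_ml_r K.ml_assoc)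
    also have "\<dots> = K.sm m (\<lambda>i. K.sm m (\<lambda>j. if j = l then (if i = k then M k l else czero m) else czero m) m) m"
    proof (intro K.sm_cong)
      fix i j assume i: "i < m" and j: "j < m"
      show "cmul m (cmul m (pc m k) (qc m i)) (cmul m (M i j) (cmul m (pc m j) (qc m l))) =
          (if j = l then (if i = k then M k l else czero m) else czero m)"
        using i j k l MK by (simp add: pq)
    qed
    also have "\<dots> = K.sm m (\<lambda>i. if i = k then M k l else czero m) m"
      using k l MK by (intro K.sm_cong) (simp add: K.sm_delta)
    also have "\<dots> = M k l" using k l MK by (simp add: K.sm_delta)
    finally show "cmul m (cmul m (pc m k) (gm m M)) (qc m l) = M k l" .
  qed
  then show ?thesis using M MatC_mext_eq by simp
qed

lemma hm_bij: "bij_betw (hm m) (C m) (MatC m)"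
proof (rule bij_betw_byWitness[where f'="gm m"])
  show "\<forall>x\<in>C m. gm m (hm m x) = x" using gm_hm by blast
  show "\<forall>M\<in>MatC m. hm m (gm m M) = M" using hm_gm by blast
  show "hm m ` C m \<subseteq> MatC m" using hm_MatC by blast
  show "gm m ` MatC m \<subseteq> C m" using gm_C by blast
qed

lemma hm_inj: "x \<in> C m \<Longrightarrow> y \<in> C m \<Longrightarrow> hm m x = hm m y \<Longrightarrow> x = y"
  by (metis gm_hm)

lemma hm_lq: "x \<in> C m \<Longrightarrow> y \<in> C m \<Longrightarrow> K.lq m x y \<Longrightarrow> i < m \<Longrightarrow> j < m \<Longrightarrow> K.lq m (hm m x i j) (hm m y i j)"
proof -
  assume x: "x \<in> C m" and y: "y \<in> C m" and xy: "K.lq m x y" and i: "i < m" and j: "j < m"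
  have "hm m y = hm m (cadd m x y)" using xy by (simp add: K.lq_def)
  also have "\<dots> = madd m (hm m x) (hm m y)" using x y by (rule hm_add)
  finally have e: "hm m y = madd m (hm m x) (hm m y)" .
  have "hm m y i j = madd m (hm m x) (hm m y) i j" by (rule fun_cong[OF fun_cong[OF e]])
  also have "\<dots> = cadd m (hm m x i j) (hm m y i j)" by (simp only: madd_def mext_in[OF i j])
  finally show ?thesis by (simp add: K.lq_def)
qed

lemma lq_hm: "x \<in> C m \<Longrightarrow> y \<in> C m \<Longrightarrow> (\<And>i j. i < m \<Longrightarrow> j < m \<Longrightarrow> K.lq m (hm m x i j) (hm m y i j)) \<Longrightarrow> K.lq m x y"
proof -
  assume x: "x \<in> C m" and y: "y \<in> C m" and h: "\<And>i j. i < m \<Longrightarrow> j < m \<Longrightarrow> K.lq m (hm m x i j) (hm m y i j)"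
  have "hm m (cadd m x y) = madd m (hm m x) (hm m y)" using x y by (rule hm_add)
  also have "\<dots> = mext m (hm m y)" unfolding madd_def
    by (rule mext_cong) (use h in \<open>simp add: K.lq_def\<close>)
  also have "\<dots> = hm m y" using hm_MatC[OF y] MatC_mext_eq by simp
  finally have "cadd m x y = y" using x y by (intro hm_inj) auto
  then show ?thesis by (simp add: K.lq_def)
qed


lemma hm_one_entry: "j < m \<Longrightarrow> hm m (cone m) j j = cone m"
  by (simp add: hm_one mone_def mext_in)

lemma hm_mul_entry: "x \<in> C m \<Longrightarrow> y \<in> C m \<Longrightarrow> i < m \<Longrightarrow> j < m \<Longrightarrow>
  hm m (cmul m x y) i j = K.sm m (\<lambda>k. cmul m (hm m x i k) (hm m y k j)) m"
  by (simp add: hm_mul mmul_def mext_in)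

lemma hm_add_entry: "x \<in> C m \<Longrightarrow> y \<in> C m \<Longrightarrow> i < m \<Longrightarrow> j < m \<Longrightarrow>
  hm m (cadd m x y) i j = cadd m (hm m x i j) (hm m y i j)"
  by (simp add: hm_add madd_def mext_in)

lemma hm_star: "x \<in> C m \<Longrightarrow> hm m (cstar m x) = mstar m (hm m x)"
proof -
  assume x: "x \<in> C m"
  define S0 where "S0 = gstar (cadd m) (cmul m) (cstar m) (czero m) m (hm m x)"
  have HK: "\<And>i j. i < m \<Longrightarrow> j < m \<Longrightarrow> hm m x i j \<in> C m" using x by simp
  have SK: "\<And>i j. i < m \<Longrightarrow> j < m \<Longrightarrow> S0 i j \<in> C m"
    unfolding S0_def by (rule K.gs_K) (use HK in auto)
  have xs: "cstar m x \<in> C m" using x by simp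
  define T where "T = hm m (cstar m x)"
  have TK: "\<And>i j. i < m \<Longrightarrow> j < m \<Longrightarrow> T i j \<in> C m" using xs T_def by simp
  define s where "s = gm m (mext m S0)"
  have SM: "mext m S0 \<in> MatC m" by (rule mext_MatC) (rule SK)
  have sC: "s \<in> C m" unfolding s_def using SM by (rule gm_C)
  have hs: "hm m s = mext m S0" unfolding s_def using SM by (rule hm_gm)
  have hsij: "\<And>i j. i < m \<Longrightarrow> j < m \<Longrightarrow> hm m s i j = S0 i j" using hs by (simp add: mext_in)
  have le1: "\<And>i j. i < m \<Longrightarrow> j < m \<Longrightarrow> K.lq m (T i j) (S0 i j)"
  proof -
    have "K.lq m (cadd m (cone m) (cmul m x s)) s"
    proof (rule lq_hm)
      show "cadd m (cone m) (cmul m x s) \<in> C m" using x sC by simp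
      show "s \<in> C m" by (rule sC)
      fix i j assume i: "i < m" and j: "j < m"
      have "hm m (cadd m (cone m) (cmul m x s)) i j
          = cadd m (if i = j then cone m else czero m) (K.sm m (\<lambda>k. cmul m (hm m x i k) (S0 k j)) m)"
        using i j x sC by (simp add: hm_add_entry hm_mul_entry hm_one mone_def mext_in hsij cong: K.sm_cong_simp)
      also have "K.lq m \<dots> (S0 i j)"
        unfolding S0_def by (rule K.gs_unfold) (use HK i j in auto)
      finally show "K.lq m (hm m (cadd m (cone m) (cmul m x s)) i j) (hm m s i j)" using hsij i j by simp
    qed
    then have a: "K.lq m (cone m) s" and b: "K.lq m (cmul m x s) s" using x sC by (auto simp: K.pl_lq_iff)
    have c: "K.lq m (cmul m (cstar m x) s) s" using b x sC unfolding K.lq_def by (intro K.star_ind) auto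
    have "K.lq m (cmul m (cstar m x) (cone m)) (cmul m (cstar m x) s)" using a x sC by (intro K.ml_mono_r) auto
    then have "K.lq m (cstar m x) s" using c x sC K.lq_trans by (metis K.eK K.ml_e_r K.mlK K.stK)
    then show "\<And>i j. i < m \<Longrightarrow> j < m \<Longrightarrow> K.lq m (T i j) (S0 i j)"
      unfolding T_def using hm_lq[OF xs sC] hsij by metis
  qed
  have le2: "\<And>i j. i < m \<Longrightarrow> j < m \<Longrightarrow> K.lq m (S0 i j) (T i j)"
  proof -
    fix i j assume i: "i < m" and j: "j < m"
    have un: "cadd m (cadd m (cone m) (cmul m x (cstar m x))) (cstar m x) = cstar m x" using x by (rule K.star_unfold)
    then have a: "K.lq m (cone m) (cstar m x)" and b: "K.lq m (cmul m x (cstar m x)) (cstar m x)"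
      using x unfolding K.lq_def by (metis K.pl_lq_iff K.lq_def K.eK K.mlK K.stK)+
    have col: "\<And>i'. i' < m \<Longrightarrow> K.lq m (K.sm m (\<lambda>k. cmul m (hm m x i' k) (T k j)) m) (T i' j)"
    proof -
      fix i' assume i': "i' < m"
      have "K.lq m (hm m (cmul m x (cstar m x)) i' j) (T i' j)"
        unfolding T_def using hm_lq[OF _ xs b i' j] x by simp
      then show "K.lq m (K.sm m (\<lambda>k. cmul m (hm m x i' k) (T k j)) m) (T i' j)"
        using x xs i' j by (simp add: hm_mul_entry T_def)
    qed
    have g: "K.lq m (K.sm m (\<lambda>k. cmul m (S0 i k) (T k j)) m) (T i j)"
      unfolding S0_def by (rule K.gs_ind) (use HK TK col i j in auto)
    have tjj: "K.lq m (cone m) (T j j)"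
      using hm_lq[OF _ xs a j j] hm_one_entry[OF j] T_def by simp
    have l1: "K.lq m (cmul m (S0 i j) (cone m)) (cmul m (S0 i j) (T j j))"
      using tjj SK TK i j by (intro K.ml_mono_r) auto
    have e1: "cmul m (S0 i j) (cone m) = S0 i j" using SK i j by simp
    have l2: "K.lq m (cmul m (S0 i j) (T j j)) (K.sm m (\<lambda>k. cmul m (S0 i k) (T k j)) m)"
      using SK TK i j by (intro K.lq_sm) auto
    have smK: "K.sm m (\<lambda>k. cmul m (S0 i k) (T k j)) m \<in> C m" using SK TK i j by simp
    have l3: "K.lq m (S0 i j) (K.sm m (\<lambda>k. cmul m (S0 i k) (T k j)) m)"
      using K.lq_trans[OF l1 l2] e1 smK SK TK i j by simp
    show "K.lq m (S0 i j) (T i j)" using K.lq_trans[OF l3 g] smK SK TK i j by simp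
  qed
  have "T = mext m S0"
  proof -
    have "T = mext m T" using T_def xs hm_MatC MatC_mext_eq by metis
    also have "\<dots> = mext m S0"
      by (rule mext_cong) (use le1 le2 SK TK K.lq_antisym in metis)
    finally show ?thesis .
  qed
  then show ?thesis unfolding T_def mstar_def S0_def .
qed

theorem KA_iso_hm: "KA_iso m (hm m)"
  unfolding KA_iso_def using hm_bij hm_zero hm_one hm_add hm_mul hm_star by blast


theorem theorem11:
  fixes m :: nat
  assumes "0 < m"
  shows "\<exists>h. KA_iso m h"
  using KA_iso_hm by blast

end
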